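(* Let $P,p,\kappa\in\mathbb{C}\setminus\{0\}$ and let $\sum_{k\ge0}y^kA_k(x)$ be a formal solution of $(\ddagger)$ with all $A_k$ rational in $x$ and $A_0\not\equiv0$. Then $A_0\equiv q$ for some constant $q\in\mathbb{C}\setminus\{0\}$ (the general solution of the equation for $A_0$ being $q\exp(-3c/(2x^{2/3}))$), $A_1(x)\equiv\dfrac{8p^2(q^3-1)}{3P^2\kappa^2q}$, and for every $k\in\mathbb{N}$, $A_k$ is an even polynomial in $x$ of degree at most $2(N_k+1)$, where $N_k=\lfloor 2(k-1)/3\rfloor$. The coefficients of $x^{2m}$, $0\le m\le N_k$, in $A_k$ are uniquely determined by $q$ and the lower-order data, while the coefficient of $x^{2(N_k+1)}$ is zero when $k\equiv1\pmod 3$ and is an arbitrary complex constant otherwise. Moreover, $A_k$ satisfies the linear ODE $$P^{2k}\kappa^{2k}q^{2k-1}\Big(9x^2A_k''-3(8k-5)xA_k'+8k(2k-1)A_k\Big)=R_k(x),$$ where $R_k$ is an even polynomial in $x$ of degree at most $2N_k$ determined by $A_0,\dots,A_{k-1}$.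
   Context: Fix $P,p,\kappa\in\mathbb{C}\setminus\{0\}$. Define the differential operator $$D=\frac{iP}{x^2y}\frac{\partial}{\partial y}-\Big(\frac{x}{2}+\frac{iP}{xy^2}\Big(1+\frac{\kappa^2(y^2-1)}{4(4y+\kappa^2(y-1)^2)}\Big)\Big)\frac{\partial}{\partial x},$$ and let $(\ddagger)$ be the PDE $$D^2\ln A=-\frac{p^2}{3x^4y^4\big(1+\kappa^2(y-1)^2/(4y)\big)}\Big(A-\frac{1}{A^2}\Big).$$ A series $\sum_ky^kA_k(x)$ with coefficients rational in $x$ is a formal solution if after substitution into $(\ddagger)$ (with $D^2\ln A=(A\,D^2A-(DA)^2)/A^2$, denominators cleared) and expansion in powers of $y$ all coefficients vanish identically. *)

theory Defs
  imports "HOL-Computational_Algebra.Computational_Algebra" "HOL-Computational_Algebra.Field_as_Ring"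
begin

type_synonym ratfun = "complex poly fract"

definition rcst :: "complex \<Rightarrow> ratfun" where
  "rcst c = to_fract [:c:]"

definition rX :: ratfun where
  "rX = to_fract [:0, 1:]"

definition rderiv :: "ratfun \<Rightarrow> ratfun" where
  "rderiv r = (case quot_of_fract r of (a, b) \<Rightarrow>
                 Fract (pderiv a * b - a * pderiv b) (b * b))"

text \<open>Coefficient of x^n of a rational function (meaningful when it is a polynomial).\<close>
definition xcoeff :: "ratfun \<Rightarrow> nat \<Rightarrow> complex" where
  "xcoeff r n = coeff (fst (quot_of_fract r)) n"

text \<open>Formal Laurent series in y with rational-function coefficients;
  partial derivative in x acts coefficientwise, partial derivative in y is fls_deriv.\<close>
definition xderiv :: "ratfun fls \<Rightarrow> ratfun fls" where
  "xderiv F = Abs_fls (\<lambda>n. rderiv (fls_nth F n))"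

abbreviation (input) kc :: "complex \<Rightarrow> ratfun fls" where
  "kc c \<equiv> fls_const (rcst c)"

abbreviation (input) xx :: "ratfun fls" where
  "xx \<equiv> fls_const rX"

abbreviation (input) yy :: "ratfun fls" where
  "yy \<equiv> fls_X"

definition opD :: "complex \<Rightarrow> complex \<Rightarrow> ratfun fls \<Rightarrow> ratfun fls" where
  "opD P \<kappa> F =
     (kc (\<i> * P) / (xx^2 * yy)) * fls_deriv F
     - (xx / 2 + (kc (\<i> * P) / (xx * yy^2)) *
          (1 + kc (\<kappa>^2) * (yy^2 - 1) / (4 * (4 * yy + kc (\<kappa>^2) * (yy - 1)^2))))
       * xderiv F"

text \<open>Formal solution of the PDE: D^2 ln A = (A D^2 A - (D A)^2)/A^2 = RHS (A - 1/A^2),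
  with the denominator A^2 cleared, i.e. A D^2A - (DA)^2 = RHS (A^3 - 1), as an identity
  of formal Laurent series in y over the field of rational functions in x
  (all coefficients of all powers of y vanish).\<close>
definition formal_sol :: "complex \<Rightarrow> complex \<Rightarrow> complex \<Rightarrow> ratfun fps \<Rightarrow> bool" where
  "formal_sol P p \<kappa> A \<longleftrightarrow>
     (let S = fps_to_fls A in
        S * opD P \<kappa> (opD P \<kappa> S) - (opD P \<kappa> S)^2 =
        - kc (p^2) / (3 * xx^4 * yy^4 * (1 + kc (\<kappa>^2) * (yy - 1)^2 / (4 * yy)))
          * (S^3 - 1))"

definition Nk :: "nat \<Rightarrow> nat" where
  "Nk k = (2 * (k - 1)) div 3"

definition even_poly_le :: "complex poly \<Rightarrow> nat \<Rightarrow> bool" where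
  "even_poly_le a d \<longleftrightarrow> degree a \<le> d \<and> (\<forall>j. odd j \<longrightarrow> coeff a j = 0)"

end

theory Submission
  imports Defs
begin

lemma rderiv_Fract:
  assumes b: "b \<noteq> 0"
  shows "rderiv (Fract a b) = Fract (pderiv a * b - a * pderiv b) (b * b)"
proof -
  obtain a0 b0 where q: "quot_of_fract (Fract a b) = (a0, b0)" by (cases "quot_of_fract (Fract a b)")
  have b0: "b0 \<noteq> 0" using snd_quot_of_fract_nonzero[of "Fract a b"] q by simp
  have "Fract a0 b0 = Fract a b" using Fract_quot_of_fract[of "Fract a b"] q by simp
  hence e1: "a * b0 = a0 * b" using b b0 by (simp add: eq_fract)
  hence "pderiv (a * b0) = pderiv (a0 * b)" by simp
  hence e2: "pderiv a * b0 + a * pderiv b0 = pderiv a0 * b + a0 * pderiv b"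
    by (simp add: pderiv_mult algebra_simps)
  have "(pderiv a0 * b0 - a0 * pderiv b0) * (b * b) = (pderiv a * b - a * pderiv b) * (b0 * b0)"
  proof -
    have "(pderiv a * b - a * pderiv b) * (b0 * b0) = (pderiv a * b0) * b * b0 - (a * b0) * pderiv b * b0"
      by (simp add: algebra_simps)
    also have "pderiv a * b0 = pderiv a0 * b + a0 * pderiv b - a * pderiv b0" using e2 by (simp add: algebra_simps)
    also have "(pderiv a0 * b + a0 * pderiv b - a * pderiv b0) * b * b0 = pderiv a0 * b * b * b0 + a0 * pderiv b * b * b0 - (a * b0) * pderiv b0 * b"
      by (simp add: algebra_simps)
    finally show ?thesis unfolding e1 by (simp add: algebra_simps)
  qed
  thus ?thesis using b b0 q by (simp add: rderiv_def eq_fract)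
qed

lemma rderiv_to_fract [simp]: "rderiv (to_fract p) = to_fract (pderiv p)"
  by (simp add: to_fract_def rderiv_Fract)

lemma rderiv_0 [simp]: "rderiv 0 = 0"
  using rderiv_to_fract[of 0] by simp
lemma rderiv_1 [simp]: "rderiv 1 = 0"
  using rderiv_to_fract[of 1] by simp

lemma rderiv_add [simp]: "rderiv (r + s) = rderiv r + rderiv s"
proof (cases r; cases s)
  fix a b c d assume r: "r = Fract a b" "b \<noteq> 0" and s: "s = Fract c d" "d \<noteq> 0"
  show ?thesis using r s
    by (simp add: rderiv_Fract pderiv_add pderiv_mult eq_fract algebra_simps)
qed

lemma rderiv_mult [simp]: "rderiv (r * s) = rderiv r * s + r * rderiv s"
proof (cases r; cases s)
  fix a b c d assume r: "r = Fract a b" "b \<noteq> 0" and s: "s = Fract c d" "d \<noteq> 0"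
  show ?thesis using r s
    by (simp add: rderiv_Fract pderiv_add pderiv_mult eq_fract algebra_simps)
qed

lemma rderiv_uminus [simp]: "rderiv (- r) = - rderiv r"
  using rderiv_add[of r "-r"] by (simp add: eq_neg_iff_add_eq_0 add.commute)

lemma rderiv_diff [simp]: "rderiv (r - s) = rderiv r - rderiv s"
  using rderiv_add[of r "-s"] by simp

lemma to_fract_pCons1 [simp]: "to_fract [:1:] = 1" by (metis to_fract_1 one_pCons)

lemma rcst_to_fract: "rcst c = to_fract [:c:]" by (simp add: rcst_def)
lemma rderiv_rcst [simp]: "rderiv (rcst c) = 0" by (simp add: rcst_def)
lemma rderiv_rX [simp]: "rderiv rX = 1" by (simp add: rX_def pderiv_pCons)

lemma rcst_add [simp]: "rcst (a + b) = rcst a + rcst b" by (simp add: rcst_def flip: to_fract_add)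
lemma rcst_mult [simp]: "rcst (a * b) = rcst a * rcst b"
  by (simp add: rcst_def flip: to_fract_mult)
lemma rcst_0 [simp]: "rcst 0 = 0" by (simp add: rcst_def)
lemma rcst_1 [simp]: "rcst 1 = 1" by (metis rcst_def to_fract_1 one_pCons)
lemma rcst_eq_iff [simp]: "rcst a = rcst b \<longleftrightarrow> a = b" by (simp add: rcst_def)
lemma rcst_eq_0_iff [simp]: "rcst a = 0 \<longleftrightarrow> a = 0" by (simp add: rcst_def)

lemma rderiv_power [simp]: "rderiv (r ^ Suc n) = of_nat (Suc n) * r ^ n * rderiv r"
  by (induction n) (auto simp: algebra_simps)

lemma rderiv_of_nat [simp]: "rderiv (of_nat n) = 0"
proof -
  have "(of_nat n :: ratfun) = to_fract (of_nat n)" by (induction n) simp_all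
  thus ?thesis by simp
qed
lemma rderiv_numeral [simp]: "rderiv (numeral n) = 0"
  using rderiv_of_nat[of "numeral n"] by simp

lemma coeff_xp: "coeff ([:0, 1:] * (p :: complex poly)) n = (if n = 0 then 0 else coeff p (n - 1))"
  by (cases n) simp_all

lemma coeff_xpderiv: "coeff ([:0, 1:] * pderiv (p :: complex poly)) n = of_nat n * coeff p n"
  by (cases n) (simp_all add: coeff_xp coeff_pderiv)

lemma coeff_xxpderiv2: "coeff ([:0, 0, 1:] * pderiv (pderiv (p :: complex poly))) n = of_nat n * (of_nat n - 1) * coeff p n"
proof -
  have "coeff ([:0, 0, 1:] * q) n = (if n < 2 then 0 else coeff q (n - 2))" for q :: "complex poly"
    by (cases n; cases "n - 1") auto
  thus ?thesis
    by (cases n; cases "n - 1") (auto simp: coeff_pderiv algebra_simps)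
qed

definition cf :: "complex \<Rightarrow> ratfun fps" where "cf c = fps_const (rcst c)"
definition thy :: "ratfun fps \<Rightarrow> ratfun fps" where "thy X = Abs_fps (\<lambda>n. of_nat n * X $ n)"
definition thx :: "ratfun fps \<Rightarrow> ratfun fps" where "thx X = Abs_fps (\<lambda>n. rX * rderiv (X $ n))"
definition xsq :: "ratfun fps" where "xsq = fps_const (rX ^ 2)"

lemma cf_nth [simp]: "cf c $ n = (if n = 0 then rcst c else 0)" by (simp add: cf_def)
lemma cf_mult: "cf (a * b) = cf a * cf b" by (simp add: cf_def)
lemma cf_add: "cf (a + b) = cf a + cf b" by (simp add: cf_def)
lemma cf_diff: "cf (a - b) = cf a - cf b" by (simp add: cf_def rcst_def flip: to_fract_diff)
lemma cf_0 [simp]: "cf 0 = 0" by (simp add: cf_def)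
lemma cf_1 [simp]: "cf 1 = 1" by (simp add: cf_def)
lemma thy_nth [simp]: "thy X $ n = of_nat n * X $ n" by (simp add: thy_def)
lemma thx_nth [simp]: "thx X $ n = rX * rderiv (X $ n)" by (simp add: thx_def)

lemma thy_add [simp]: "thy (X + Y) = thy X + thy Y" by (rule fps_ext) (simp add: algebra_simps)
lemma thx_add [simp]: "thx (X + Y) = thx X + thx Y" by (rule fps_ext) (simp add: algebra_simps)
lemma thy_diff [simp]: "thy (X - Y) = thy X - thy Y" by (rule fps_ext) (simp add: algebra_simps)
lemma thx_diff [simp]: "thx (X - Y) = thx X - thx Y" by (rule fps_ext) (simp add: algebra_simps)
lemma thy_uminus [simp]: "thy (- X) = - thy X" by (rule fps_ext) (simp add: algebra_simps)
lemma thx_uminus [simp]: "thx (- X) = - thx X" by (rule fps_ext) (simp add: algebra_simps)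

text \<open>Weights\<close>

definition okc :: "int \<Rightarrow> nat \<Rightarrow> complex poly \<Rightarrow> bool" where
  "okc w k c \<longleftrightarrow> (\<forall>n. coeff c n \<noteq> 0 \<longrightarrow> even n \<and> 3 * int n - 4 * int k \<le> w)"

definition PW :: "int \<Rightarrow> ratfun fps \<Rightarrow> bool" where
  "PW w X \<longleftrightarrow> (\<forall>k. \<exists>c. X $ k = to_fract c \<and> okc w k c)"

lemma PW_E: assumes "PW w X" obtains c where "\<And>k. X $ k = to_fract (c k)" "\<And>k. okc w k (c k)"
proof -
  from assms have "\<forall>k. \<exists>c. X $ k = to_fract c \<and> okc w k c" by (simp add: PW_def)
  then obtain c where "\<forall>k. X $ k = to_fract (c k) \<and> okc w k (c k)" by metis
  thus ?thesis using that by blast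
qed

lemma PW_mono: "PW w X \<Longrightarrow> w \<le> w' \<Longrightarrow> PW w' X"
  unfolding PW_def okc_def by (meson order_trans)

lemma PW_0 [simp]: "PW w 0"
  unfolding PW_def okc_def by (auto intro: exI[of _ 0])

lemma okc_add: "okc w k c \<Longrightarrow> okc w k d \<Longrightarrow> okc w k (c + d)"
  unfolding okc_def by (metis add.right_neutral coeff_add)
lemma okc_uminus: "okc w k c \<Longrightarrow> okc w k (- c)"
  unfolding okc_def by simp
lemma okc_smult: "okc w k c \<Longrightarrow> okc w k (smult a c)"
  unfolding okc_def by simp

lemma PW_add: "PW w X \<Longrightarrow> PW w Y \<Longrightarrow> PW w (X + Y)"
  unfolding PW_def by (metis fps_add_nth okc_add to_fract_add)
lemma PW_uminus: "PW w X \<Longrightarrow> PW w (- X)"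
  unfolding PW_def by (metis fps_neg_nth okc_uminus to_fract_uminus)
lemma PW_diff: "PW w X \<Longrightarrow> PW w Y \<Longrightarrow> PW w (X - Y)"
  using PW_add[of w X "- Y"] PW_uminus[of w Y] by simp

lemma PW_add': "PW w1 X \<Longrightarrow> PW w2 Y \<Longrightarrow> w1 \<le> w \<Longrightarrow> w2 \<le> w \<Longrightarrow> PW w (X + Y)"
  by (meson PW_add PW_mono)
lemma PW_diff': "PW w1 X \<Longrightarrow> PW w2 Y \<Longrightarrow> w1 \<le> w \<Longrightarrow> w2 \<le> w \<Longrightarrow> PW w (X - Y)"
  by (meson PW_diff PW_mono)

lemma okc_sum: "finite A \<Longrightarrow> (\<And>i. i \<in> A \<Longrightarrow> okc w k (f i)) \<Longrightarrow> okc w k (\<Sum>i\<in>A. f i)"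
proof (induction A rule: finite_induct)
  case empty thus ?case by (simp add: okc_def)
next
  case (insert x F) thus ?case by (simp add: okc_add)
qed

lemma okc_mult: "okc w1 i c \<Longrightarrow> okc w2 j d \<Longrightarrow> okc (w1 + w2) (i + j) (c * d)"
  unfolding okc_def
proof (intro allI impI)
  fix n assume A: "\<forall>n. coeff c n \<noteq> 0 \<longrightarrow> even n \<and> 3 * int n - 4 * int i \<le> w1"
     and B: "\<forall>n. coeff d n \<noteq> 0 \<longrightarrow> even n \<and> 3 * int n - 4 * int j \<le> w2"
     and nz: "coeff (c * d) n \<noteq> 0"
  from nz obtain l where l: "l \<in> {..n}" "coeff c l * coeff d (n - l) \<noteq> 0"
    unfolding coeff_mult using sum.not_neutral_contains_not_neutral by blast
  define m where "m = n - l"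
  have nlm: "n = l + m" using l(1) by (simp add: m_def)
  have "coeff c l \<noteq> 0" "coeff d m \<noteq> 0" using l(2) by (auto simp: m_def)
  with A B have h: "even l" "even m" "3 * int l - 4 * int i \<le> w1" "3 * int m - 4 * int j \<le> w2" by auto
  show "even n \<and> 3 * int n - 4 * int (i + j) \<le> w1 + w2"
    unfolding nlm using h by auto
qed

lemma PW_mult: assumes "PW w1 X" "PW w2 Y" shows "PW (w1 + w2) (X * Y)"
proof -
  obtain c where c: "\<And>k. X $ k = to_fract (c k)" "\<And>k. okc w1 k (c k)" using PW_E[OF assms(1)] by blast
  obtain d where d: "\<And>k. Y $ k = to_fract (d k)" "\<And>k. okc w2 k (d k)" using PW_E[OF assms(2)] by blast
  show ?thesis unfolding PW_def
  proof
    fix k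
    have "(X * Y) $ k = to_fract (\<Sum>i=0..k. c i * d (k - i))"
      by (simp add: fps_mult_nth c d)
    moreover have "okc (w1 + w2) k (\<Sum>i=0..k. c i * d (k - i))"
    proof (rule okc_sum)
      fix i assume "i \<in> {0..k}"
      hence "i + (k - i) = k" by simp
      thus "okc (w1 + w2) k (c i * d (k - i))" using okc_mult[OF c(2)[of i] d(2)[of "k - i"]] by simp
    qed simp
    ultimately show "\<exists>c. (X * Y) $ k = to_fract c \<and> okc (w1 + w2) k c" by blast
  qed
qed

lemma PW_mult': "PW w1 X \<Longrightarrow> PW w2 Y \<Longrightarrow> w1 + w2 \<le> w \<Longrightarrow> PW w (X * Y)"
  by (meson PW_mult PW_mono)

lemma PW_cf: "0 \<le> w \<Longrightarrow> PW w (cf c)"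
  unfolding PW_def
proof
  fix k assume w: "0 \<le> w"
  show "\<exists>d. cf c $ k = to_fract d \<and> okc w k d"
  proof (cases "k = 0")
    case True thus ?thesis using w
      by (intro exI[of _ "[:c:]"]) (auto simp: rcst_def okc_def coeff_pCons split: nat.splits)
  qed (auto simp: okc_def intro: exI[of _ 0])
qed

lemma PW_1: "0 \<le> w \<Longrightarrow> PW w 1"
  using PW_cf[of w 1] by simp

lemma PW_X: "-4 \<le> w \<Longrightarrow> PW w fps_X"
  unfolding PW_def
proof
  fix k assume w: "-4 \<le> w"
  show "\<exists>d. fps_X $ k = to_fract d \<and> okc w k d"
  proof (cases "k = 1")
    case True thus ?thesis using w
      by (intro exI[of _ "1"]) (auto simp: okc_def coeff_1 fps_X_def)
  qed (auto simp: okc_def fps_X_def intro: exI[of _ 0])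
qed

lemma PW_xsq: "6 \<le> w \<Longrightarrow> PW w xsq"
  unfolding PW_def
proof
  fix k assume w: "6 \<le> w"
  show "\<exists>d. xsq $ k = to_fract d \<and> okc w k d"
  proof (cases "k = 0")
    case True
    have "rX ^ 2 = to_fract [:0, 0, 1:]" by (simp add: rX_def power2_eq_square flip: to_fract_mult)
    moreover have "okc w 0 [:0, 0, 1:]" using w by (auto simp: okc_def coeff_pCons split: nat.splits)
    ultimately show ?thesis using True by (auto simp: xsq_def)
  qed (auto simp: okc_def xsq_def intro: exI[of _ 0])
qed



lemma PW_power': "PW w X \<Longrightarrow> w \<le> 0 \<Longrightarrow> PW (int n * w) (X ^ n)"
  by (induction n) (auto simp: PW_1 algebra_simps intro: PW_mult')

lemma of_nat_rcst: "(of_nat k :: ratfun) = rcst (of_nat k)"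
  by (induction k) simp_all

lemma of_nat_ratfun: "(of_nat k :: ratfun) = to_fract [:of_nat k:]"
  by (simp add: of_nat_rcst rcst_def)

lemma to_fract_const_mult: "to_fract [:a:] * to_fract c = to_fract (smult a c)"
  by (simp flip: to_fract_mult)

lemma PW_thy: "PW w X \<Longrightarrow> PW w (thy X)"
proof -
  assume A: "PW w X"
  obtain c where c: "\<And>k. X $ k = to_fract (c k)" "\<And>k. okc w k (c k)" using PW_E[OF A] by blast
  show ?thesis unfolding PW_def
  proof
    fix k show "\<exists>d. thy X $ k = to_fract d \<and> okc w k d"
      by (intro exI[of _ "smult (of_nat k) (c k)"]) (simp add: c of_nat_ratfun to_fract_const_mult okc_smult)
  qed
qed

lemma coeff_pCons0_pderiv [simp]: "coeff (pCons 0 (pderiv (p :: complex poly))) n = of_nat n * coeff p n"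
  using coeff_xpderiv[of p n] by simp

lemma to_fract_smult: "to_fract (smult a q) = rcst a * to_fract q"
  by (simp add: rcst_def flip: to_fract_mult)

lemma to_fract_pCons0_smult [simp]: "to_fract (pCons 0 (smult a q)) = rcst a * to_fract (pCons 0 q)"
  by (metis smult_pCons mult_zero_right to_fract_smult)

lemma cf_times_nth [simp]: "(cf c * X) $ n = rcst c * X $ n" by (simp add: cf_def)

lemma PW_thx: "PW w X \<Longrightarrow> PW w (thx X)"
proof -
  assume A: "PW w X"
  obtain c where c: "\<And>k. X $ k = to_fract (c k)" "\<And>k. okc w k (c k)" using PW_E[OF A] by blast
  show ?thesis unfolding PW_def
  proof
    fix k
    have "okc w k ([:0, 1:] * pderiv (c k))" using c(2)[of k] by (auto simp: okc_def coeff_xpderiv)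
    thus "\<exists>d. thx X $ k = to_fract d \<and> okc w k d"
      by (intro exI[of _ "[:0, 1:] * pderiv (c k)"]) (simp add: c rX_def flip: to_fract_mult)
  qed
qed

lemma PW_top:
  assumes "PW w X" "even w"
  shows "PW (w - 2) (cf 4 * thy X - cf 3 * thx X + cf (of_int w) * X)"
proof -
  obtain c where c: "\<And>k. X $ k = to_fract (c k)" "\<And>k. okc w k (c k)" using PW_E[OF assms(1)] by blast
  show ?thesis unfolding PW_def
  proof
    fix k
    define d where "d = smult (4 * of_nat k + of_int w) (c k) - smult 3 ([:0, 1:] * pderiv (c k))"
    have cd: "coeff d n = (4 * of_nat k + of_int w - 3 * of_nat n) * coeff (c k) n" for n
      unfolding d_def coeff_diff coeff_smult coeff_xpderiv by (simp add: algebra_simps)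
    have "(cf 4 * thy X - cf 3 * thx X + cf (of_int w) * X) $ k
       = rcst 4 * (of_nat k * X $ k) - rcst 3 * (rX * rderiv (X $ k)) + rcst (of_int w) * X $ k" by simp
    also have "\<dots> = to_fract d"
      by (simp add: d_def c to_fract_smult rX_def of_nat_rcst algebra_simps flip: to_fract_mult)
    finally have "(cf 4 * thy X - cf 3 * thx X + cf (of_int w) * X) $ k = to_fract d" .
    moreover have "okc (w - 2) k d" unfolding okc_def
    proof (intro allI impI)
      fix n assume nz: "coeff d n \<noteq> 0"
      hence c0: "coeff (c k) n \<noteq> 0" and ne: "4 * of_nat k + of_int w - 3 * of_nat n \<noteq> (0::complex)"
        by (auto simp: cd)
      from c0 c(2)[of k] have ev: "even n" and le: "3 * int n - 4 * int k \<le> w" by (auto simp: okc_def)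
      have "3 * int n - 4 * int k \<noteq> w"
      proof
        assume "3 * int n - 4 * int k = w"
        hence "of_int w = (of_int (3 * int n - 4 * int k) :: complex)" by simp
        hence "4 * of_nat k + of_int w - 3 * of_nat n = (0::complex)" by simp
        with ne show False by simp
      qed
      moreover from ev obtain n' where "n = 2 * n'" by (auto elim: evenE)
      moreover from assms(2) obtain w' where "w = 2 * w'" by (auto elim: evenE)
      ultimately show "even n \<and> 3 * int n - 4 * int k \<le> w - 2" using le ev by presburger
    qed
    ultimately show "\<exists>d. (cf 4 * thy X - cf 3 * thx X + cf (of_int w) * X) $ k = to_fract d \<and> okc (w - 2) k d"
      by blast
  qed
qed

text \<open>Orders in y\<close>

definition ordge :: "nat \<Rightarrow> ratfun fps \<Rightarrow> bool" where
  "ordge n X \<longleftrightarrow> (\<forall>j<n. X $ j = 0)"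

lemma ordge_0 [simp]: "ordge 0 X" by (simp add: ordge_def)
lemma ordge_mono: "ordge a X \<Longrightarrow> b \<le> a \<Longrightarrow> ordge b X" by (simp add: ordge_def)
lemma ordge_add: "ordge a X \<Longrightarrow> ordge a Y \<Longrightarrow> ordge a (X + Y)" by (simp add: ordge_def)
lemma ordge_diff: "ordge a X \<Longrightarrow> ordge a Y \<Longrightarrow> ordge a (X - Y)" by (simp add: ordge_def)
lemma ordge_uminus: "ordge a X \<Longrightarrow> ordge a (- X)" by (simp add: ordge_def)
lemma ordge_thy: "ordge a X \<Longrightarrow> ordge a (thy X)" by (simp add: ordge_def)
lemma ordge_thx: "ordge a X \<Longrightarrow> ordge a (thx X)" by (simp add: ordge_def)
lemma ordge_cf: "ordge a X \<Longrightarrow> ordge a (cf c * X)" by (simp add: ordge_def)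
lemma ordge_X: "ordge 1 fps_X" by (simp add: ordge_def)
lemma ordge_Xpow: "ordge n (fps_X ^ n)" by (simp add: ordge_def fps_X_power_nth)

lemma ordge_mult_gen:
  assumes "ordge a X" "ordge b Y"
  shows "ordge (a + b) (X * Y) \<and> (X * Y) $ (a + b) = X $ a * Y $ b"
proof -
  have z: "X $ i * Y $ (n - i) = 0" if "n < a + b \<or> (n = a + b \<and> i \<noteq> a)" "i \<le> n" for n i
  proof (cases "i < a")
    case True thus ?thesis using assms(1) by (simp add: ordge_def)
  next
    case False
    hence "n - i < b" using that by auto
    thus ?thesis using assms(2) by (simp add: ordge_def)
  qed
  have "ordge (a + b) (X * Y)" unfolding ordge_def fps_mult_nth
    using z by (intro allI impI sum.neutral) auto
  moreover have "(X * Y) $ (a + b) = (\<Sum>i\<in>{0..a+b}. if i = a then X $ a * Y $ b else 0)"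
    unfolding fps_mult_nth by (rule sum.cong) (auto simp: z)
  ultimately show ?thesis by simp
qed

lemma ordge_mult: "ordge a X \<Longrightarrow> ordge b Y \<Longrightarrow> ordge (a + b) (X * Y)"
  using ordge_mult_gen by blast
lemma ordge_mult_nth: "ordge a X \<Longrightarrow> ordge b Y \<Longrightarrow> (X * Y) $ (a + b) = X $ a * Y $ b"
  using ordge_mult_gen by blast
lemma ordge_mult': "ordge a X \<Longrightarrow> ordge b Y \<Longrightarrow> c \<le> a + b \<Longrightarrow> ordge c (X * Y)"
  using ordge_mult ordge_mono by blast
lemma ordge_nth0: "ordge a X \<Longrightarrow> j < a \<Longrightarrow> X $ j = 0" by (simp add: ordge_def)

lemma rcst_numeral [simp]: "rcst (numeral n) = numeral n"
  using of_nat_rcst[of "numeral n"] by simp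
lemma cf_numeral [simp]: "cf (numeral n) = numeral n"
  by (simp add: cf_def numeral_fps_const)
lemma cf_uminus [simp]: "cf (- a) = - cf a"
  by (simp add: cf_def rcst_def flip: to_fract_uminus)
lemma PW_xsq6: "PW 6 xsq" by (rule PW_xsq) simp
lemma PW_cf0: "PW 0 (cf c)" by (rule PW_cf) simp
lemma PW_X4: "PW (-4) fps_X" by (rule PW_X) simp

locale prm =
  fixes P p \<kappa> :: complex
  assumes P0: "P \<noteq> 0" and p0: "p \<noteq> 0" and k0: "\<kappa> \<noteq> 0"
begin

definition "aa = \<i> * P"
definition "Ey = cf (\<kappa>^2) + fps_X * (cf (4 - 2 * \<kappa>^2) + cf (\<kappa>^2) * fps_X)"
definition "Wr = cf 2 * Ey * xsq * fps_X + cf aa * (cf (16 - 8 * \<kappa>^2) + cf (5 * \<kappa>^2) * fps_X)"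
definition "Wf = cf (3 * aa * \<kappa>^2) + fps_X * Wr"
definition "Vf X = cf (4 * aa) * Ey * thy X - Wf * thx X"
definition "Kf = cf 4 * Ey * fps_X ^ 2"
definition "Jf = Vf Kf - cf 2 * Wf * Kf"
definition "Ecl2 S = S * (Kf * Vf (Vf S) - Jf * Vf S) - Kf * (Vf S)^2
    + cf (256 * p^2 / 3) * Ey^2 * fps_X^3 * (S^3 - 1)"

lemma aa_nz: "aa \<noteq> 0" using P0 by (simp add: aa_def)

lemma Vf_add: "Vf (X + Y) = Vf X + Vf Y" by (simp add: Vf_def algebra_simps)
lemma Vf_diff: "Vf (X - Y) = Vf X - Vf Y" by (simp add: Vf_def algebra_simps)

lemma PW_Ey: "PW 0 Ey"
proof -
  have a: "PW 0 (cf (4 - 2 * \<kappa>^2) + cf (\<kappa>^2) * fps_X)"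
    by (rule PW_add'[OF PW_cf0 PW_mult[OF PW_cf0 PW_X4]]) auto
  show ?thesis unfolding Ey_def
    by (rule PW_add'[OF PW_cf0 PW_mult[OF PW_X4 a]]) auto
qed

lemma PW_Ey': "PW (-4) (Ey - cf (\<kappa>^2))"
proof -
  have a: "PW 0 (cf (4 - 2 * \<kappa>^2) + cf (\<kappa>^2) * fps_X)"
    by (rule PW_add'[OF PW_cf0 PW_mult[OF PW_cf0 PW_X4]]) auto
  have "Ey - cf (\<kappa>^2) = fps_X * (cf (4 - 2 * \<kappa>^2) + cf (\<kappa>^2) * fps_X)" by (simp add: Ey_def)
  also have "PW (-4) \<dots>" by (rule PW_mult'[OF PW_X4 a]) auto
  finally show ?thesis .
qed

lemma PW_Wr: "PW 2 Wr"
proof -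
  have a: "PW 2 (cf 2 * Ey * xsq * fps_X)"
    by (rule PW_mult'[OF PW_mult[OF PW_mult[OF PW_cf0 PW_Ey] PW_xsq6] PW_X4]) auto
  have b: "PW 0 (cf aa * (cf (16 - 8 * \<kappa>^2) + cf (5 * \<kappa>^2) * fps_X))"
    by (rule PW_mult'[OF PW_cf0 PW_add'[OF PW_cf0 PW_mult[OF PW_cf0 PW_X4], of 0]]) auto
  show ?thesis unfolding Wr_def by (rule PW_add'[OF a b]) auto
qed

lemma PW_Wf': "PW (-2) (Wf - cf (3 * aa * \<kappa>^2))"
proof -
  have "Wf - cf (3 * aa * \<kappa>^2) = fps_X * Wr" by (simp add: Wf_def)
  also have "PW (-2) \<dots>" by (rule PW_mult'[OF PW_X4 PW_Wr]) auto
  finally show ?thesis .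
qed

lemma Vf_top_id:
  "Vf X + cf (aa * \<kappa>^2 * of_int w) * X =
     cf (aa * \<kappa>^2) * (cf 4 * thy X - cf 3 * thx X + cf (of_int w) * X)
     + cf (4 * aa) * (Ey - cf (\<kappa>^2)) * thy X - (Wf - cf (3 * aa * \<kappa>^2)) * thx X"
  by (simp add: Vf_def cf_mult algebra_simps)

lemma PW_Vf_top:
  assumes "PW w X" "even w"
  shows "PW (w - 2) (Vf X + cf (aa * \<kappa>^2 * of_int w) * X)"
proof -
  have a: "PW (w - 2) (cf (aa * \<kappa>^2) * (cf 4 * thy X - cf 3 * thx X + cf (of_int w) * X))"
    by (rule PW_mult'[OF PW_cf0 PW_top[OF assms]]) auto
  have b: "PW (w - 2) (cf (4 * aa) * (Ey - cf (\<kappa>^2)) * thy X)"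
    by (rule PW_mult'[OF PW_mult[OF PW_cf0 PW_Ey'] PW_thy[OF assms(1)]]) auto
  have c: "PW (w - 2) ((Wf - cf (3 * aa * \<kappa>^2)) * thx X)"
    by (rule PW_mult'[OF PW_Wf' PW_thx[OF assms(1)]]) auto
  show ?thesis unfolding Vf_top_id by (intro PW_diff PW_add a b c)
qed

lemma PW_Vf: "PW 0 S \<Longrightarrow> PW (-2) (Vf S)"
  using PW_Vf_top[of 0 S] by simp

lemma PW_Kf: "PW (-8) Kf"
  unfolding Kf_def
  by (rule PW_mult'[OF PW_mult[OF PW_cf0 PW_Ey] PW_power'[OF PW_X4, of 2]]) auto

lemma Jf_id: "Jf - cf (2 * aa * \<kappa>^2) * Kf =
   (Vf Kf + cf (aa * \<kappa>^2 * of_int (-8)) * Kf) - cf 2 * (Wf - cf (3 * aa * \<kappa>^2)) * Kf"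
  by (simp add: Jf_def cf_mult cf_diff algebra_simps)

lemma PW_Jf': "PW (-10) (Jf - cf (2 * aa * \<kappa>^2) * Kf)"
proof -
  have a: "PW (-10) (Vf Kf + cf (aa * \<kappa>^2 * of_int (-8)) * Kf)" using PW_Vf_top[OF PW_Kf] by simp
  have b: "PW (-10) (cf 2 * (Wf - cf (3 * aa * \<kappa>^2)) * Kf)"
    by (rule PW_mult'[OF PW_mult[OF PW_cf0 PW_Wf'] PW_Kf]) auto
  show ?thesis unfolding Jf_id by (rule PW_diff[OF a b])
qed

lemma Ecl2_id: "S * (Kf * Vf T - Jf * T) =
   S * (Kf * (Vf T + cf (aa * \<kappa>^2 * of_int (-2)) * T) - (Jf - cf (2 * aa * \<kappa>^2) * Kf) * T)"
  by (simp add: cf_mult algebra_simps)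

theorem PW_Ecl2:
  assumes S: "PW 0 S"
  shows "PW (-12) (Ecl2 S)"
proof -
  define T where "T = Vf S"
  have T: "PW (-2) T" using PW_Vf[OF S] by (simp add: T_def)
  have VT: "PW (-4) (Vf T + cf (aa * \<kappa>^2 * of_int (-2)) * T)"
    using PW_Vf_top[OF T] by simp
  have A: "PW (-12) (S * (Kf * Vf T - Jf * T))"
    unfolding Ecl2_id
    by (rule PW_mult'[OF S PW_diff'[OF PW_mult[OF PW_Kf VT] PW_mult[OF PW_Jf' T]]]) auto
  have B: "PW (-12) (Kf * T^2)"
    using PW_mult[OF PW_Kf PW_power'[OF T, of 2]] by simp
  have C: "PW (-12) (cf (256 * p^2 / 3) * Ey^2 * fps_X^3 * (S^3 - 1))"
    by (rule PW_mult'[OF PW_mult[OF PW_mult[OF PW_cf0 PW_power'[OF PW_Ey, of 2]]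
          PW_power'[OF PW_X4, of 3]] PW_diff'[OF PW_power'[OF S, of 3] PW_1[of 0], of 0]]) auto
  show ?thesis unfolding Ecl2_def T_def[symmetric]
    by (intro PW_add PW_diff A B C)
qed

end

lemma rcst_power [simp]: "rcst (a ^ n) = rcst a ^ n" by (induction n) simp_all
lemma rcst_of_nat [simp]: "rcst (of_nat n) = of_nat n" by (simp add: of_nat_rcst)
lemma rcst_uminus [simp]: "rcst (- a) = - rcst a" by (simp add: rcst_def flip: to_fract_uminus)
lemma rcst_diff [simp]: "rcst (a - b) = rcst a - rcst b" by (simp add: rcst_def flip: to_fract_diff)
lemma rcst_divide: "b \<noteq> 0 \<Longrightarrow> rcst (a / b) = rcst a / rcst b"
  by (simp add: rcst_def eq_divide_eq flip: to_fract_mult)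

lemma ordge_numeral_mult: "ordge a X \<Longrightarrow> ordge a (numeral n * X)"
  by (simp add: ordge_def numeral_fps_const)

definition trunc :: "nat \<Rightarrow> ratfun fps \<Rightarrow> ratfun fps" where
  "trunc m S = Abs_fps (\<lambda>j. if j < m then S $ j else 0)"

lemma trunc_nth [simp]: "trunc m S $ j = (if j < m then S $ j else 0)" by (simp add: trunc_def)

definition EulR :: "nat \<Rightarrow> ratfun \<Rightarrow> ratfun" where
  "EulR m r = 9 * rX^2 * rderiv (rderiv r) - rcst (3 * (8 * of_nat m - 5)) * rX * rderiv r
     + rcst (8 * of_nat m * (2 * of_nat m - 1)) * r"

context prm begin

lemma Ey_nth0 [simp]: "Ey $ 0 = rcst (\<kappa>^2)" by (simp add: Ey_def)
lemma Wf_nth0 [simp]: "Wf $ 0 = rcst (3 * aa * \<kappa>^2)" by (simp add: Wf_def)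

lemma Vf_ordge: assumes "ordge n X" shows "ordge n (Vf X)"
proof -
  have "ordge (0 + n) (cf (4 * aa) * Ey * thy X)" by (rule ordge_mult[OF ordge_0 ordge_thy[OF assms]])
  moreover have "ordge (0 + n) (Wf * thx X)" by (rule ordge_mult[OF ordge_0 ordge_thx[OF assms]])
  ultimately show ?thesis unfolding Vf_def by (simp add: ordge_diff)
qed

lemma Vf_nth: assumes "ordge n X"
  shows "Vf X $ n = rcst (4 * aa) * rcst (\<kappa>^2) * (of_nat n * X $ n) - rcst (3 * aa * \<kappa>^2) * (rX * rderiv (X $ n))"
proof -
  have "(cf (4 * aa) * Ey * thy X) $ (0 + n) = (cf (4 * aa) * Ey) $ 0 * thy X $ n"
    by (rule ordge_mult_nth[OF ordge_0 ordge_thy[OF assms]])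
  moreover have "(Wf * thx X) $ (0 + n) = Wf $ 0 * thx X $ n"
    by (rule ordge_mult_nth[OF ordge_0 ordge_thx[OF assms]])
  ultimately show ?thesis unfolding Vf_def by simp
qed

lemma Kf_ordge: "ordge 2 Kf"
  unfolding Kf_def using ordge_mult[OF ordge_0[of "cf 4 * Ey"] ordge_Xpow[of 2]] by (simp only: add_0)

lemma Kf_nth2: "Kf $ 2 = 4 * rcst (\<kappa>^2)"
proof -
  have "(cf 4 * Ey * fps_X ^ 2) $ 2 = (cf 4 * Ey) $ 0 * (fps_X ^ 2) $ 2"
    using ordge_mult_nth[OF ordge_0[of "cf 4 * Ey"] ordge_Xpow[of 2]] by (simp only: add_0)
  thus ?thesis unfolding Kf_def by (simp add: cf_def)
qed

lemma Jf_ordge: "ordge 2 Jf"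
  unfolding Jf_def
  by (intro ordge_diff Vf_ordge Kf_ordge) (rule ordge_mult'[OF ordge_0 Kf_ordge], simp)

lemma Jf_nth2: "Jf $ 2 = rcst (4 * aa) * rcst (\<kappa>^2) * (2 * (4 * rcst (\<kappa>^2)))
    - 2 * rcst (3 * aa * \<kappa>^2) * (4 * rcst (\<kappa>^2))"
proof -
  have "(cf 2 * Wf * Kf) $ 2 = (cf 2 * Wf) $ 0 * Kf $ 2"
    using ordge_mult_nth[OF ordge_0 Kf_ordge, of "cf 2 * Wf"] by (simp only: add_0)
  hence "(cf 2 * Wf * Kf) $ 2 = 2 * rcst (3 * aa * \<kappa>^2) * (4 * rcst (\<kappa>^2))"
    by (simp add: Kf_nth2 cf_def del: cf_numeral)
  moreover have "Vf Kf $ 2 = rcst (4 * aa) * rcst (\<kappa>^2) * (2 * (4 * rcst (\<kappa>^2)))"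
    using Vf_nth[OF Kf_ordge] by (simp add: Kf_nth2 del: rcst_mult rcst_power)
  ultimately show ?thesis unfolding Jf_def by simp
qed

lemma Ecl2_expand:
  fixes Tr U :: "ratfun fps"
  defines "T1 \<equiv> Vf Tr" and "T2 \<equiv> Vf U"
  shows "Ecl2 (Tr + U) - Ecl2 Tr = Tr * Kf * Vf T2 - Tr * Jf * T2 + U * (Kf * Vf T1 - Jf * T1)
     + U * (Kf * Vf T2 - Jf * T2) - Kf * (T2 * (T1 + T1 + T2))
     + (cf (256 * p^2 / 3) * Ey^2 * fps_X^3) * (U * (3 * Tr^2 + 3 * Tr * U + U^2))"
  unfolding Ecl2_def Vf_add T1_def[symmetric] T2_def[symmetric]
  by (simp add: power2_eq_square power3_eq_cube algebra_simps)

lemma Ecl2_lin: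
  assumes m: "m \<ge> 1" and S0: "S $ 0 = rcst q"
  shows "Ecl2 S $ (m + 2) = Ecl2 (trunc m S) $ (m + 2) + rcst (4 * q * aa^2 * \<kappa>^6) * EulR m (S $ m)"
proof -
  define Tr where "Tr = trunc m S"
  define U where "U = S - Tr"
  define T1 where "T1 = Vf Tr"
  define T2 where "T2 = Vf U"
  have SU: "S = Tr + U" by (simp add: U_def)
  have U: "ordge m U" by (simp add: ordge_def U_def Tr_def)
  have Um: "U $ m = S $ m" by (simp add: U_def Tr_def)
  have Tr0: "Tr $ 0 = rcst q" using m S0 by (simp add: Tr_def)
  have T10: "T1 $ 0 = 0" using Vf_nth[OF ordge_0[of Tr]] by (simp add: T1_def Tr0)
  hence T1: "ordge 1 T1" by (simp add: ordge_def)
  have VT10: "Vf T1 $ 0 = 0" using Vf_nth[OF ordge_0[of T1]] by (simp add: T10)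
  hence VT1: "ordge 1 (Vf T1)" by (simp add: ordge_def)
  have T2: "ordge m T2" unfolding T2_def by (rule Vf_ordge[OF U])
  have VT2: "ordge m (Vf T2)" by (rule Vf_ordge[OF T2])
  have T2m: "T2 $ m = rcst (4 * aa) * rcst (\<kappa>^2) * (of_nat m * S $ m) - rcst (3 * aa * \<kappa>^2) * (rX * rderiv (S $ m))"
    using Vf_nth[OF U] by (simp add: T2_def Um del: rcst_mult rcst_power)
  have VT2m: "Vf T2 $ m = rcst (4 * aa) * rcst (\<kappa>^2) * (of_nat m * T2 $ m) - rcst (3 * aa * \<kappa>^2) * (rX * rderiv (T2 $ m))"
    using Vf_nth[OF T2] by (simp del: rcst_mult rcst_power)
  have e1: "(Tr * Kf * Vf T2) $ (m + 2) = Tr $ 0 * Kf $ 2 * Vf T2 $ m"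
  proof -
    have a: "ordge (0 + 2) (Tr * Kf)" "(Tr * Kf) $ (0 + 2) = Tr $ 0 * Kf $ 2"
      using ordge_mult_gen[OF ordge_0 Kf_ordge] by auto
    have "(Tr * Kf * Vf T2) $ ((0 + 2) + m) = (Tr * Kf) $ (0 + 2) * Vf T2 $ m"
      by (rule ordge_mult_nth[OF a(1) VT2])
    thus ?thesis using a(2) by (simp add: add.commute)
  qed
  have e2: "(Tr * Jf * T2) $ (m + 2) = Tr $ 0 * Jf $ 2 * T2 $ m"
  proof -
    have a: "ordge (0 + 2) (Tr * Jf)" "(Tr * Jf) $ (0 + 2) = Tr $ 0 * Jf $ 2"
      using ordge_mult_gen[OF ordge_0 Jf_ordge] by auto
    have "(Tr * Jf * T2) $ ((0 + 2) + m) = (Tr * Jf) $ (0 + 2) * T2 $ m"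
      by (rule ordge_mult_nth[OF a(1) T2])
    thus ?thesis using a(2) by (simp add: add.commute)
  qed
  have z: "X $ (m + 2) = 0" if "ordge (m + 3) X" for X using that by (simp add: ordge_def)
  have "ordge 3 (Kf * Vf T1 - Jf * T1)"
    by (intro ordge_diff ordge_mult'[OF Kf_ordge VT1] ordge_mult'[OF Jf_ordge T1]) auto
  hence e3: "(U * (Kf * Vf T1 - Jf * T1)) $ (m + 2) = 0"
    by (intro z ordge_mult[OF U])
  have "ordge (2 + m) (Kf * Vf T2 - Jf * T2)"
    by (intro ordge_diff ordge_mult[OF Kf_ordge VT2] ordge_mult[OF Jf_ordge T2])
  hence e4: "(U * (Kf * Vf T2 - Jf * T2)) $ (m + 2) = 0"
    by (intro z ordge_mult'[OF U]) (use m in auto)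
  have "ordge 1 (T1 + T1 + T2)" by (intro ordge_add T1 ordge_mono[OF T2 m])
  hence "ordge (m + 1) (T2 * (T1 + T1 + T2))" by (rule ordge_mult[OF T2])
  hence e5: "(Kf * (T2 * (T1 + T1 + T2))) $ (m + 2) = 0"
    by (intro z ordge_mult'[OF Kf_ordge]) auto
  have F: "ordge 3 (cf (256 * p^2 / 3) * Ey^2 * fps_X^3)"
    by (rule ordge_mult'[OF ordge_0 ordge_Xpow[of 3]]) simp
  have e6: "((cf (256 * p^2 / 3) * Ey^2 * fps_X^3) * (U * (3 * Tr^2 + 3 * Tr * U + U^2))) $ (m + 2) = 0"
    using ordge_mult[OF F ordge_mult[OF U ordge_0[of "3 * Tr^2 + 3 * Tr * U + U^2"]]]
    by (intro z) (simp add: add.commute)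
  have diff: "Ecl2 S $ (m + 2) - Ecl2 Tr $ (m + 2) = Tr $ 0 * Kf $ 2 * Vf T2 $ m - Tr $ 0 * Jf $ 2 * T2 $ m"
  proof -
    have "Ecl2 S $ (m + 2) - Ecl2 Tr $ (m + 2) = (Ecl2 (Tr + U) - Ecl2 Tr) $ (m + 2)" by (simp add: SU)
    also have "\<dots> = Tr $ 0 * Kf $ 2 * Vf T2 $ m - Tr $ 0 * Jf $ 2 * T2 $ m"
      unfolding Ecl2_expand T1_def[symmetric] T2_def[symmetric]
      by (simp only: fps_add_nth fps_sub_nth e1 e2 e3 e4 e5 e6) simp
    finally show ?thesis .
  qed
  have fin: "Tr $ 0 * Kf $ 2 * Vf T2 $ m - Tr $ 0 * Jf $ 2 * T2 $ m = rcst (4 * q * aa^2 * \<kappa>^6) * EulR m (S $ m)"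
    unfolding VT2m T2m Tr0 Kf_nth2 Jf_nth2 EulR_def
    by (simp add: eval_nat_numeral algebra_simps)
  show ?thesis using diff fin by (simp add: Tr_def algebra_simps)
qed

end

lemma rX_nz: "rX \<noteq> 0" by (simp add: rX_def)

lemma rX_power: "rX ^ d = Fract (monom 1 d) 1"
  by (simp add: rX_def monom_altdef to_fract_def flip: to_fract_def) 
     (induction d, simp_all add: to_fract_def One_fract_def)

lemma coeff_X3: "coeff ([:0, 3:] * pderiv (p :: complex poly)) n = 3 * of_nat n * coeff p n"
  by (cases n) (simp_all add: coeff_pderiv algebra_simps)

lemma FO:
  assumes E0: "rcst 3 * rX * rderiv r = rcst \<alpha> * r" and rnz: "r \<noteq> 0"
  shows "\<exists>c j d. r * rX ^ d = rcst c * rX ^ j \<and> \<alpha> = 3 * (of_nat j - of_nat d)"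
proof -
  define u where "u = fst (quot_of_fract r)"
  define v where "v = snd (quot_of_fract r)"
  have r: "r = Fract u v" by (simp add: u_def v_def)
  have v0: "v \<noteq> 0" by (simp add: v_def)
  have u0: "u \<noteq> 0" using rnz by (simp add: u_def)
  have cop: "coprime v u" using coprime_quot_of_fract[of r] by (simp add: u_def v_def coprime_commute)
  define X3 :: "complex poly" where "X3 = [:0, 3:]"
  have "rcst 3 * rX * rderiv r = Fract (X3 * (pderiv u * v - u * pderiv v)) (v * v)"
    by (simp add: r rderiv_Fract v0 rcst_def rX_def to_fract_def X3_def)
  moreover have "rcst \<alpha> * r = Fract ([:\<alpha>:] * u) v" by (simp add: r rcst_def to_fract_def)
  ultimately have "X3 * (pderiv u * v - u * pderiv v) * v = [:\<alpha>:] * u * (v * v)"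
    using E0 v0 by (simp add: eq_fract)
  hence E: "X3 * (pderiv u * v - u * pderiv v) = [:\<alpha>:] * u * v"
    using v0 by (metis (no_types, lifting) mult.assoc mult_right_cancel)
  have "u * (X3 * pderiv v) = v * (X3 * pderiv u - [:\<alpha>:] * u)"
    using E by (simp add: algebra_simps)
  hence "v dvd u * (X3 * pderiv v)" by simp
  hence dv: "v dvd X3 * pderiv v" using coprime_dvd_mult_right_iff[OF cop] by simp
  obtain lam where lam: "X3 * pderiv v = smult lam v"
  proof (cases "pderiv v = 0")
    case True thus ?thesis using that[of 0] by simp
  next
    case False
    obtain s where s: "X3 * pderiv v = v * s" using dv by (elim dvdE)
    have X30: "X3 \<noteq> 0" by (simp add: X3_def)
    have s0: "s \<noteq> 0" using s False X30 by auto
    have dv1: "degree v \<ge> 1" using False pderiv_eq_0_iff[of v] by simp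
    have "degree (X3 * pderiv v) = 1 + (degree v - 1)"
      using False X30 by (simp add: degree_mult_eq degree_pderiv X3_def)
    also have "\<dots> = degree v" using dv1 by simp
    finally have "degree (v * s) = degree v" using s by simp
    hence "degree s = 0" using v0 s0 by (simp add: degree_mult_eq)
    then obtain c where "s = [:c:]" using degree0_coeffs by blast
    thus ?thesis using that[of c] s by simp
  qed
  have cv: "3 * of_nat n * coeff v n = lam * coeff v n" for n
  proof -
    have "coeff (X3 * pderiv v) n = 3 * of_nat n * coeff v n"
      unfolding X3_def by (rule coeff_X3)
    thus ?thesis using lam by auto
  qed
  define d where "d = degree v"
  have vd: "coeff v d \<noteq> 0" using v0 by (simp add: d_def)
  have lamd: "lam = 3 * of_nat d" using cv[of d] vd by simp
  have vsupp: "coeff v n \<noteq> 0 \<Longrightarrow> n = d" for n using cv[of n] lamd by simp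
  have "X3 * pderiv u * v = u * (X3 * pderiv v) + [:\<alpha>:] * u * v"
    using E by (simp add: algebra_simps)
  also have "\<dots> = smult (lam + \<alpha>) u * v" by (simp add: lam algebra_simps) (simp only: smult_add_left[symmetric])
  finally have "X3 * pderiv u = smult (lam + \<alpha>) u" using v0 by (metis mult_right_cancel)
  hence cu: "3 * of_nat n * coeff u n = (lam + \<alpha>) * coeff u n" for n
    using coeff_X3[of u n] unfolding X3_def by auto
  define j where "j = degree u"
  have uj: "coeff u j \<noteq> 0" using u0 by (simp add: j_def)
  have cu': "coeff u n \<noteq> 0 \<Longrightarrow> 3 * of_nat n = lam + \<alpha>" for n
  proof -
    assume nz: "coeff u n \<noteq> 0"
    have "(3 * of_nat n - (lam + \<alpha>)) * coeff u n = 0" using cu[of n] by (simp add: algebra_simps)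
    thus ?thesis using nz by simp
  qed
  have alj: "\<alpha> = 3 * (of_nat j - of_nat d)" using cu'[OF uj] lamd by (simp add: algebra_simps)
  have usupp: "coeff u n \<noteq> 0 \<Longrightarrow> n = j" for n
  proof -
    assume "coeff u n \<noteq> 0"
    hence "3 * (of_nat n :: complex) = 3 * of_nat j" using cu'[OF uj] cu'[of n] by simp
    thus "n = j" by simp
  qed
  have um: "u = monom (coeff u j) j"
    by (rule poly_eqI) (metis coeff_monom usupp)
  have vm: "v = monom (coeff v d) d"
    by (rule poly_eqI) (metis coeff_monom vsupp)
  have "r * rX ^ d = rcst (coeff u j / coeff v d) * rX ^ j"
  proof -
    have "r * rX ^ d = Fract (u * monom 1 d) v" by (simp add: r rX_power)
    also have "\<dots> = Fract ([:coeff u j / coeff v d:] * monom 1 j) 1"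
      using v0 vd by (subst eq_fract) (simp_all, subst um, subst vm, simp add: mult_monom smult_monom)
    also have "\<dots> = rcst (coeff u j / coeff v d) * rX ^ j" by (simp add: rX_power rcst_def to_fract_def)
    finally show ?thesis .
  qed
  thus ?thesis using alj by blast
qed

definition Fo :: "complex \<Rightarrow> ratfun \<Rightarrow> ratfun" where
  "Fo \<alpha> r = rcst 3 * rX * rderiv r - rcst \<alpha> * r"

definition FoP :: "complex \<Rightarrow> complex poly \<Rightarrow> complex poly" where
  "FoP \<alpha> q = [:0, 3:] * pderiv q - smult \<alpha> q"

lemma coeff_FoP: "coeff (FoP \<alpha> q) n = (3 * of_nat n - \<alpha>) * coeff q n"
  unfolding FoP_def coeff_diff coeff_X3 coeff_smult by (simp add: algebra_simps)

lemma to_fract_X3: "to_fract ([:0, 3:] * s) = rcst 3 * rX * to_fract s"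
proof -
  have "[:0, 3:] * s = smult 3 ([:0, 1:] * s)" by simp
  thus ?thesis by (simp only: to_fract_smult to_fract_mult rX_def mult.assoc)
qed

lemma to_fract_FoP: "to_fract (FoP \<alpha> q) = Fo \<alpha> (to_fract q)"
  unfolding FoP_def Fo_def to_fract_diff to_fract_X3 to_fract_smult by simp

lemma Fo_diff: "Fo \<alpha> (r - s) = Fo \<alpha> r - Fo \<alpha> s"
  by (simp add: Fo_def algebra_simps)

lemma to_fract_power: "to_fract (q ^ n) = to_fract q ^ n"
  by (induction n) simp_all

lemma FI:
  assumes E: "Fo (of_nat al) r = to_fract g"
      and G: "\<And>n. coeff g n \<noteq> 0 \<Longrightarrow> 3 * n \<noteq> al"
  shows "\<exists>q. r = to_fract q \<and> (\<forall>n. coeff q n \<noteq> 0 \<longrightarrow> coeff g n \<noteq> 0 \<or> 3 * n = al)"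
proof -
  define f where "f = (\<lambda>n. coeff g n / (3 * of_nat n - of_nat al :: complex))"
  have fz: "f i = 0" if "i > degree g" for i using that by (simp add: f_def coeff_eq_0)
  define p1 where "p1 = Abs_poly f"
  have cp1: "coeff p1 = f" unfolding p1_def by (rule coeff_Abs_poly) (use fz in auto)
  have "FoP (of_nat al) p1 = g"
  proof (rule poly_eqI)
    fix n
    show "coeff (FoP (of_nat al) p1) n = coeff g n"
    proof (cases "coeff g n = 0")
      case True thus ?thesis by (simp add: coeff_FoP cp1 f_def)
    next
      case False
      hence "3 * n \<noteq> al" using G by blast
      hence "of_nat (3 * n) \<noteq> (of_nat al :: complex)" by (simp only: of_nat_eq_iff) simp
      hence "(3 * of_nat n - of_nat al :: complex) \<noteq> 0" by simp
      thus ?thesis by (simp add: coeff_FoP cp1 f_def)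
    qed
  qed
  hence "Fo (of_nat al) (r - to_fract p1) = 0" using E by (simp add: Fo_diff flip: to_fract_FoP)
  hence E2: "rcst 3 * rX * rderiv (r - to_fract p1) = rcst (of_nat al) * (r - to_fract p1)"
    by (simp add: Fo_def)
  have p1supp: "coeff p1 n \<noteq> 0 \<Longrightarrow> coeff g n \<noteq> 0" for n by (simp add: cp1 f_def)
  show ?thesis
  proof (cases "r - to_fract p1 = 0")
    case True thus ?thesis using p1supp by (intro exI[of _ p1]) auto
  next
    case False
    from FO[OF E2 False] obtain c j d where
      cjd: "(r - to_fract p1) * rX ^ d = rcst c * rX ^ j" "of_nat al = 3 * (of_nat j - of_nat d :: complex)"
      by blast
    have "(of_nat al :: complex) = of_nat (3 * j) - of_nat (3 * d)" using cjd(2) by (simp add: algebra_simps)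
    hence "of_nat (al + 3 * d) = (of_nat (3 * j) :: complex)" by (simp add: algebra_simps)
    hence jd: "al + 3 * d = 3 * j" by (simp only: of_nat_eq_iff)
    hence jd': "j = d + (j - d)" by simp
    have "(r - to_fract p1) * rX ^ d = rcst c * rX ^ (j - d) * rX ^ d"
      using cjd(1) jd' by (metis mult.commute mult.left_commute power_add)
    hence "r - to_fract p1 = rcst c * rX ^ (j - d)" using rX_nz by simp
    moreover have "rcst c * rX ^ (j - d) = to_fract (monom c (j - d))"
      by (simp add: monom_altdef to_fract_smult rX_def to_fract_power)
    ultimately have "r = to_fract (p1 + monom c (j - d))" by (simp add: algebra_simps)
    moreover have "\<forall>n. coeff (p1 + monom c (j - d)) n \<noteq> 0 \<longrightarrow> coeff g n \<noteq> 0 \<or> 3 * n = al"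
      using p1supp jd by (auto simp: coeff_monom split: if_splits)
    ultimately show ?thesis by blast
  qed
qed

lemma EulR_Fo: "m \<ge> 1 \<Longrightarrow> EulR m r = Fo (of_nat (4 * m)) (Fo (of_nat (4 * m - 2)) r)"
  by (simp add: EulR_def Fo_def of_nat_diff eval_nat_numeral algebra_simps)

lemma EU:
  assumes m: "m \<ge> 1" and E: "EulR m r = to_fract g"
      and G: "\<And>n. coeff g n \<noteq> 0 \<Longrightarrow> 3 * n + 4 \<le> 4 * m"
  shows "\<exists>q. r = to_fract q \<and> (\<forall>n. coeff q n \<noteq> 0 \<longrightarrow> coeff g n \<noteq> 0 \<or> 3 * n = 4 * m \<or> 3 * n + 2 = 4 * m)"
proof -
  have "Fo (of_nat (4 * m)) (Fo (of_nat (4 * m - 2)) r) = to_fract g" using E EulR_Fo[OF m] by simp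
  from FI[OF this] G obtain q2 where q2: "Fo (of_nat (4 * m - 2)) r = to_fract q2"
     "\<forall>n. coeff q2 n \<noteq> 0 \<longrightarrow> coeff g n \<noteq> 0 \<or> 3 * n = 4 * m" by fastforce
  have "\<And>n. coeff q2 n \<noteq> 0 \<Longrightarrow> 3 * n \<noteq> 4 * m - 2" using q2(2) G m by fastforce
  from FI[OF q2(1) this] obtain q where q: "r = to_fract q"
     "\<forall>n. coeff q n \<noteq> 0 \<longrightarrow> coeff q2 n \<noteq> 0 \<or> 3 * n = 4 * m - 2" by blast
  show ?thesis using q q2(2) m by (intro exI[of _ q]) fastforce
qed

definition EulP :: "nat \<Rightarrow> complex poly \<Rightarrow> complex poly" where
  "EulP k a = smult 9 ([:0, 0, 1:] * pderiv (pderiv a))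
               - smult (3 * (8 * of_nat k - 5)) ([:0, 1:] * pderiv a)
               + smult (8 * of_nat k * (2 * of_nat k - 1)) a"

lemma to_fract_X1: "to_fract ([:0, 1:] * s) = rX * to_fract s"
  by (simp only: to_fract_mult rX_def)

lemma to_fract_X2: "to_fract ([:0, 0, 1:] * s) = rX ^ 2 * to_fract s"
proof -
  have "[:0, 0, 1:] * s = [:0, 1:] * ([:0, 1:] * s)" by simp
  thus ?thesis by (simp only: to_fract_X1 power2_eq_square mult.assoc)
qed

lemma to_fract_EulP: "to_fract (EulP k a) = EulR k (to_fract a)"
  unfolding EulP_def EulR_def to_fract_add to_fract_diff to_fract_smult to_fract_X1 to_fract_X2
  by (simp add: algebra_simps)

lemma coeff_EulP: "coeff (EulP k a) n = (3 * of_nat n - 4 * of_nat k) * (3 * of_nat n - 4 * of_nat k + 2) * coeff a n"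
  unfolding EulP_def coeff_add coeff_diff coeff_smult coeff_xxpderiv2 coeff_xpderiv
  by (simp add: algebra_simps)

lemma ratfun_numeral_nz [simp]: "(numeral n :: ratfun) \<noteq> 0"
  using rcst_eq_0_iff[of "numeral n"] by (simp del: rcst_eq_0_iff)

lemma rderiv_rcst_power [simp]: "rderiv (rcst c ^ n) = 0"
  by (metis rcst_power rderiv_rcst)

lemma rderiv_divide:
  assumes "s \<noteq> 0" shows "rderiv (r / s) = (rderiv r * s - r * rderiv s) / s^2"
proof -
  have "r = (r / s) * s" using assms by simp
  hence "rderiv r = rderiv (r / s) * s + (r / s) * rderiv s" by (metis rderiv_mult)
  thus ?thesis using assms by (simp add: field_simps power2_eq_square)
qed

lemma rderiv_eq0_const:
  assumes "rderiv A = 0" "A \<noteq> 0" shows "\<exists>q. q \<noteq> 0 \<and> A = rcst q"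
proof -
  have "rcst 3 * rX * rderiv A = rcst 0 * A" using assms by simp
  from FO[OF this assms(2)] obtain c j d where cjd: "A * rX ^ d = rcst c * rX ^ j"
     "(0::complex) = 3 * (of_nat j - of_nat d)" by blast
  from cjd(2) have "j = d" by simp
  with cjd(1) have "A = rcst c" using rX_nz by simp
  with assms(2) show ?thesis by (intro exI[of _ c]) auto
qed

context prm begin

lemma Ecl2_ordge2: "ordge 2 (Ecl2 S)"
proof -
  have a: "ordge 2 (Kf * Vf (Vf S) - Jf * Vf S)"
    by (intro ordge_diff ordge_mult'[OF Kf_ordge ordge_0] ordge_mult'[OF Jf_ordge ordge_0]) auto
  have b: "ordge 2 (S * (Kf * Vf (Vf S) - Jf * Vf S))" using ordge_mult[OF ordge_0 a, of S] by (simp only: add_0)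
  have c: "ordge 2 (Kf * (Vf S)^2)" using ordge_mult[OF Kf_ordge ordge_0] by simp
  have d: "ordge 2 (cf (256 * p^2 / 3) * Ey^2 * fps_X^3 * (S^3 - 1))"
    using ordge_mult[OF ordge_mult[OF ordge_0 ordge_Xpow[of 3]] ordge_0, of "cf (256 * p^2 / 3) * Ey^2" "S^3 - 1"]
    by (auto intro: ordge_mono)
  show ?thesis unfolding Ecl2_def by (intro ordge_add ordge_diff b c d)
qed

lemma Ecl2_nth2:
  "Ecl2 S $ 2 = S $ 0 * (Kf $ 2 * Vf (Vf S) $ 0 - Jf $ 2 * Vf S $ 0) - Kf $ 2 * (Vf S $ 0)^2"
proof -
  have a: "(Kf * Vf (Vf S)) $ 2 = Kf $ 2 * Vf (Vf S) $ 0"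
    using ordge_mult_nth[OF Kf_ordge ordge_0] by simp
  have b: "(Jf * Vf S) $ 2 = Jf $ 2 * Vf S $ 0"
    using ordge_mult_nth[OF Jf_ordge ordge_0] by simp
  have o: "ordge 2 (Kf * Vf (Vf S) - Jf * Vf S)"
    by (intro ordge_diff ordge_mult'[OF Kf_ordge ordge_0] ordge_mult'[OF Jf_ordge ordge_0]) auto
  have c: "(S * (Kf * Vf (Vf S) - Jf * Vf S)) $ 2 = S $ 0 * (Kf * Vf (Vf S) - Jf * Vf S) $ 2"
    using ordge_mult_nth[OF ordge_0 o, of S] by (simp only: add_0)
  have d: "(Kf * (Vf S)^2) $ 2 = Kf $ 2 * (Vf S $ 0)^2"
    using ordge_mult_nth[OF Kf_ordge ordge_0, of "(Vf S)^2"]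
    by (simp add: power2_eq_square fps_mult_nth)
  have e: "(cf (256 * p^2 / 3) * Ey^2 * fps_X^3 * (S^3 - 1)) $ 2 = 0"
    using ordge_mult[OF ordge_mult[OF ordge_0 ordge_Xpow[of 3]] ordge_0, of "cf (256 * p^2 / 3) * Ey^2" "S^3 - 1"]
    by (simp add: ordge_def)
  show ?thesis unfolding Ecl2_def by (simp only: fps_add_nth fps_sub_nth c d e) (simp add: a b)
qed

lemma A0_const:
  assumes E: "Ecl2 S $ 2 = 0" and nz: "S $ 0 \<noteq> 0"
  shows "\<exists>q. q \<noteq> 0 \<and> S $ 0 = rcst q"
proof -
  define A where "A = S $ 0"
  define u where "u = rX * rderiv A"
  define c where "c = rcst (3 * aa * \<kappa>^2)"
  have c0: "c \<noteq> 0" using aa_nz k0 by (simp add: c_def)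
  have V0: "Vf S $ 0 = - c * u" using Vf_nth[OF ordge_0[of S]] by (simp add: c_def u_def A_def)
  have VV0: "Vf (Vf S) $ 0 = c * c * (rX * rderiv u)"
    using Vf_nth[OF ordge_0[of "Vf S"]] by (simp add: V0 c_def)
  have "A * (4 * rcst (\<kappa>^2) * (c * c * (rX * rderiv u)) - (rcst (4 * aa) * rcst (\<kappa>^2) * (2 * (4 * rcst (\<kappa>^2)))
    - 2 * c * (4 * rcst (\<kappa>^2))) * (- c * u)) - 4 * rcst (\<kappa>^2) * (- c * u)^2 = 0"
    using E unfolding Ecl2_nth2 V0 VV0 Kf_nth2 Jf_nth2 A_def c_def by simp
  hence "rcst (12 * aa^2 * \<kappa>^6) * (A * (3 * rX * rderiv u + 2 * u) - 3 * u^2) = 0"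
    unfolding c_def by (simp add: algebra_simps power2_eq_square eval_nat_numeral)
  hence eq: "A * (3 * rX * rderiv u + 2 * u) - 3 * u^2 = 0" using aa_nz k0 by (simp del: rcst_mult rcst_power)
  have A0: "A \<noteq> 0" using nz by (simp add: A_def)
  define w where "w = u / A"
  have "Fo (-2) w = (A * (3 * rX * rderiv u + 2 * u) - 3 * u * (rX * rderiv A)) / A^2"
    unfolding Fo_def w_def using A0 by (simp add: rderiv_divide field_simps power2_eq_square)
  also have "\<dots> = 0" using eq by (simp add: u_def[symmetric] power2_eq_square algebra_simps)
  finally have fo: "rcst 3 * rX * rderiv w = rcst (-2) * w" by (simp add: Fo_def eq_neg_iff_add_eq_0)
  have "w = 0"
  proof (rule ccontr)
    assume "w \<noteq> 0"
    from FO[OF fo this] obtain c j d where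
      "(-2::complex) = 3 * (of_nat j - of_nat d)" by blast
    hence "of_int (-2) = (of_int (3 * (int j - int d)) :: complex)" by simp
    hence "(-2::int) = 3 * (int j - int d)" by (simp only: of_int_eq_iff)
    thus False by presburger
  qed
  hence "u = 0" using A0 by (simp add: w_def)
  hence "rderiv A = 0" using rX_nz by (simp add: u_def)
  thus ?thesis using rderiv_eq0_const A0 by (simp add: A_def)
qed

end

lemma okc_const: "okc 0 0 [:q:]"
  by (auto simp: okc_def coeff_pCons split: nat.splits)

lemma PW_trunc_of:
  assumes S0: "S $ 0 = rcst q" and H: "\<And>j. 1 \<le> j \<Longrightarrow> j < k \<Longrightarrow> \<exists>a. S $ j = to_fract a \<and> okc 0 j a"
  shows "PW 0 (trunc k S)"
  unfolding PW_def
proof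
  fix j
  show "\<exists>c. trunc k S $ j = to_fract c \<and> okc 0 j c"
  proof (cases "j < k")
    case True
    show ?thesis
    proof (cases "j = 0")
      case True thus ?thesis using \<open>j < k\<close> S0 okc_const by (auto simp: rcst_def)
    next
      case False thus ?thesis using H[of j] \<open>j < k\<close> by auto
    qed
  qed (auto simp: okc_def intro: exI[of _ 0])
qed

context prm begin

lemma step:
  assumes m: "m \<ge> 1" and S0: "S $ 0 = rcst q" and q0: "q \<noteq> 0" and PWt: "PW 0 (trunc m S)"
      and E: "Ecl2 S $ (m + 2) = 0"
  shows "\<exists>a \<phi>. S $ m = to_fract a \<and> okc 0 m a \<and> Ecl2 (trunc m S) $ (m + 2) = to_fract \<phi>
     \<and> okc (-12) (m + 2) \<phi> \<and> to_fract \<phi> = - rcst (4 * q * aa^2 * \<kappa>^6) * to_fract (EulP m a)"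
proof -
  obtain \<phi> where phi: "Ecl2 (trunc m S) $ (m + 2) = to_fract \<phi>" "okc (-12) (m + 2) \<phi>"
    using PW_Ecl2[OF PWt] unfolding PW_def by blast
  define C where "C = 4 * q * aa^2 * \<kappa>^6"
  have C0: "C \<noteq> 0" using q0 aa_nz k0 by (simp add: C_def)
  have "0 = to_fract \<phi> + rcst C * EulR m (S $ m)"
    using Ecl2_lin[OF m S0] E phi(1) by (simp add: C_def)
  hence ER: "EulR m (S $ m) = to_fract (smult (- 1 / C) \<phi>)"
    using C0 by (simp add: to_fract_smult rcst_divide field_simps eq_neg_iff_add_eq_0)
  have G: "3 * n + 4 \<le> 4 * m" if "coeff (smult (- 1 / C) \<phi>) n \<noteq> 0" for n
  proof -
    have "coeff \<phi> n \<noteq> 0" using that by simp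
    hence "3 * int n - 4 * int (m + 2) \<le> -12" using phi(2) by (auto simp: okc_def)
    thus ?thesis by simp
  qed
  obtain a where a: "S $ m = to_fract a"
    "\<forall>n. coeff a n \<noteq> 0 \<longrightarrow> coeff (smult (- 1 / C) \<phi>) n \<noteq> 0 \<or> 3 * n = 4 * m \<or> 3 * n + 2 = 4 * m"
    using EU[OF m ER G] by blast
  have oka: "okc 0 m a" unfolding okc_def
  proof (intro allI impI)
    fix n assume "coeff a n \<noteq> 0"
    with a(2) consider "coeff \<phi> n \<noteq> 0" | "3 * n = 4 * m" | "3 * n + 2 = 4 * m" by auto
    thus "even n \<and> 3 * int n - 4 * int m \<le> 0"
    proof cases
      case 1 thus ?thesis using phi(2) by (auto simp: okc_def)
    qed presburger+
  qed
  have "to_fract (EulP m a) = to_fract (smult (- 1 / C) \<phi>)" using ER a(1) by (simp add: to_fract_EulP)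
  hence "to_fract \<phi> = - rcst C * to_fract (EulP m a)"
    using C0 by (simp add: to_fract_smult rcst_divide field_simps)
  thus ?thesis using a(1) oka phi unfolding C_def by blast
qed

lemma struct_sol:
  assumes E: "Ecl2 S = 0" and S0: "S $ 0 = rcst q" and q0: "q \<noteq> 0"
  shows "k \<ge> 1 \<Longrightarrow> \<exists>a. S $ k = to_fract a \<and> okc 0 k a"
proof (induction k rule: less_induct)
  case (less k)
  have "PW 0 (trunc k S)" by (rule PW_trunc_of[OF S0]) (use less in auto)
  from step[OF less(2) S0 q0 this] E show ?case by auto
qed

lemma PW_trunc_sol:
  assumes E: "Ecl2 S = 0" and S0: "S $ 0 = rcst q" and q0: "q \<noteq> 0"
  shows "PW 0 (trunc k S)"
  by (rule PW_trunc_of[OF S0 struct_sol[OF E S0 q0]])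

end

notation fls_nth (infixl \<open>$$\<close> 75)

lemma fls_times_nth_gen:
  fixes f g :: "ratfun fls"
  assumes fa: "\<forall>i<a. f $$ i = 0" and gb: "\<forall>j<b. g $$ j = 0"
  shows "(f * g) $$ n = (\<Sum>i=a..n-b. f $$ i * g $$ (n - i))"
proof (cases "f = 0 \<or> g = 0")
  case True thus ?thesis by auto
next
  case False
  hence f0: "f \<noteq> 0" and g0: "g \<noteq> 0" by auto
  have da: "a \<le> fls_subdegree f" using fls_subdegree_geI[OF f0] fa by blast
  have db: "b \<le> fls_subdegree g" using fls_subdegree_geI[OF g0] gb by blast
  have "(f * g) $$ n = (\<Sum>i=fls_subdegree f..n - fls_subdegree g. f $$ i * g $$ (n - i))"
    by (rule fls_times_nth(2))
  also have "\<dots> = (\<Sum>i=a..n-b. f $$ i * g $$ (n - i))"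
  proof (rule sum.mono_neutral_left)
    show "\<forall>i\<in>{a..n - b} - {fls_subdegree f..n - fls_subdegree g}. f $$ i * g $$ (n - i) = 0"
    proof
      fix i assume "i \<in> {a..n - b} - {fls_subdegree f..n - fls_subdegree g}"
      hence "i < fls_subdegree f \<or> n - i < fls_subdegree g" by auto
      thus "f $$ i * g $$ (n - i) = 0" by auto
    qed
  qed (use da db in auto)
  finally show ?thesis .
qed

lemma xderiv_nth [simp]: "xderiv F $$ n = rderiv (F $$ n)"
  unfolding xderiv_def by (rule nth_Abs_fls_lower_bound[of "fls_subdegree F"]) simp

lemma rderiv_sum: "rderiv (sum f A) = (\<Sum>i\<in>A. rderiv (f i))"
  by (induction A rule: infinite_finite_induct) simp_all

lemma xderiv_add [simp]: "xderiv (F + G) = xderiv F + xderiv G" by (rule fls_eqI) simp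
lemma xderiv_diff [simp]: "xderiv (F - G) = xderiv F - xderiv G" by (rule fls_eqI) simp
lemma xderiv_one [simp]: "xderiv 1 = 0" by (rule fls_eqI) simp
lemma xderiv_const [simp]: "xderiv (fls_const c) = fls_const (rderiv c)" by (rule fls_eqI) simp

lemma xderiv_mult [simp]: "xderiv (F * G) = xderiv F * G + F * xderiv G"
proof (rule fls_eqI)
  fix n
  define a where "a = fls_subdegree F"
  define b where "b = fls_subdegree G"
  have fa: "\<forall>i<a. F $$ i = 0" "\<forall>i<a. xderiv F $$ i = 0" by (simp_all add: a_def)
  have gb: "\<forall>i<b. G $$ i = 0" "\<forall>i<b. xderiv G $$ i = 0" by (simp_all add: b_def)
  show "xderiv (F * G) $$ n = (xderiv F * G + F * xderiv G) $$ n"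
    by (simp add: fls_times_nth_gen[OF fa(1) gb(1)] fls_times_nth_gen[OF fa(2) gb(1)]
        fls_times_nth_gen[OF fa(1) gb(2)] rderiv_sum sum.distrib)
qed

lemma xderiv_fps_to_fls: "xderiv (fps_to_fls S) = fps_to_fls (Abs_fps (\<lambda>n. rderiv (S $ n)))"
  by (rule fls_eqI) simp

lemma thy_alt: "thy S = fps_X * fps_deriv S"
  by (rule fps_ext) (simp add: algebra_simps)

lemma thx_alt: "thx S = fps_const rX * Abs_fps (\<lambda>n. rderiv (S $ n))"
  by (rule fps_ext) simp


lemma fls_const_diff: "fls_const (a - b) = fls_const a - fls_const (b :: ratfun)"
  by (rule fls_eqI) simp
lemma fls_const_add: "fls_const (a + b) = fls_const a + fls_const (b :: ratfun)"
  by (rule fls_eqI) simp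
lemma fls_const_mult: "fls_const (a * b) = fls_const a * fls_const (b :: ratfun)"
  by simp
lemma fls_numeral_nz [simp]: "(numeral n :: ratfun fls) \<noteq> 0"
  by (metis fls_const_numeral fls_const_nonzero ratfun_numeral_nz)
lemma fls_xx_nz [simp]: "fls_const rX \<noteq> 0" by (simp add: fls_const_nonzero rX_nz)

lemmas kc_simps = rcst_mult rcst_add rcst_diff rcst_power rcst_numeral rcst_uminus
  fls_const_diff fls_const_add fls_const_mult fls_const_power fls_const_numeral fls_const_uminus

lemma fps_to_fls_cf [simp]: "fps_to_fls (cf c) = fls_const (rcst c)" by (simp add: cf_def)
lemma fps_to_fls_xsq [simp]: "fps_to_fls xsq = fls_const rX ^ 2" by (simp add: xsq_def fls_const_power)

lemma thx_xsq: "thx xsq = 2 * xsq"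
proof (rule fps_ext)
  fix n
  have "rderiv (rX ^ 2) = 2 * rX" by (simp add: power2_eq_square)
  thus "thx xsq $ n = (2 * xsq) $ n" by (simp add: xsq_def numeral_fps_const power2_eq_square)
qed

lemma thy_xsq: "thy xsq = 0" by (rule fps_ext) (simp add: xsq_def)

context prm begin

definition "c1 = fps_to_fls (cf (4 * aa) * Ey * fps_X)"
definition "c2 = fps_to_fls (fps_const rX * Wf)"
definition "Vl F = c1 * fls_deriv F - c2 * xderiv F"

lemma Vl_fps: "Vl (fps_to_fls S) = fps_to_fls (Vf S)"
  unfolding Vl_def c1_def c2_def Vf_def thy_alt thx_alt
  by (simp add: fls_deriv_fps_to_fls xderiv_fps_to_fls fls_times_fps_to_fls algebra_simps)

lemma Vl_mult: "Vl (F * G) = Vl F * G + F * Vl G"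
  unfolding Vl_def by (simp add: algebra_simps)

lemma Vl_one: "Vl 1 = 0" by (simp add: Vl_def)

lemma Vl_inverse: assumes "F \<noteq> 0" shows "Vl (1 / F) = - Vl F / F^2"
proof -
  have "0 = Vl (F * (1 / F))" using assms by (simp add: Vl_one)
  also have "\<dots> = Vl F * (1 / F) + F * Vl (1 / F)" by (rule Vl_mult)
  finally show ?thesis using assms by (auto simp: field_simps power2_eq_square add_eq_0_iff)
qed

lemma Vf_mult: "Vf (X * Y) = Vf X * Y + X * Vf Y"
proof -
  have "fps_to_fls (Vf (X * Y)) = fps_to_fls (Vf X * Y + X * Vf Y)"
    using Vl_mult[of "fps_to_fls X" "fps_to_fls Y"]
    by (simp add: Vl_fps fls_times_fps_to_fls flip: fls_times_fps_to_fls)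
  thus ?thesis by (metis fps_to_fls_eq_iff fps_to_fls_plus)
qed

lemma Vf_xsq: "Vf xsq = - Wf * (2 * xsq)"
  by (simp add: Vf_def thx_xsq thy_xsq)

lemma Vf_xsqK: "Vf (xsq * Kf) = xsq * Jf"
  unfolding Vf_mult Vf_xsq Jf_def by (simp add: algebra_simps)


lemma Ey_nz: "Ey \<noteq> 0"
proof
  assume "Ey = 0"
  hence "Ey $ 0 = 0" by simp
  thus False using k0 by simp
qed

lemma El_nz: "fps_to_fls Ey \<noteq> 0" using Ey_nz by simp

lemma El_eq: "fps_to_fls Ey = 4 * fls_X + fls_const (rcst (\<kappa>^2)) * (fls_X - 1)^2"
  unfolding Ey_def
  by (simp add: fls_times_fps_to_fls kc_simps power2_eq_square algebra_simps
      del: fls_const_mult_const fls_plus_const)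

lemma c1_eq: "c1 = 4 * fls_const (rcst aa) * fps_to_fls Ey * fls_X"
  unfolding c1_def
  by (simp add: fls_times_fps_to_fls kc_simps del: fls_const_mult_const fls_plus_const)

lemma c2_eq: "c2 = fls_const rX * (2 * fps_to_fls Ey * fls_const rX ^ 2 * fls_X ^ 2
   + fls_const (rcst aa) * (4 * fps_to_fls Ey + fls_const (rcst (\<kappa>^2)) * (fls_X ^ 2 - 1)))"
  unfolding c2_def Wf_def Wr_def
  by (simp add: fls_times_fps_to_fls El_eq kc_simps power2_eq_square algebra_simps
      del: fls_const_mult_const fls_plus_const)

lemma H_eq: "fps_to_fls (xsq * Kf) = fls_const rX ^ 2 * 4 * fps_to_fls Ey * fls_X ^ 2"
  unfolding Kf_def
  by (simp add: fls_times_fps_to_fls fps_to_fls_power kc_simps del: fls_const_mult_const fls_plus_const)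

lemma H_nz: "fps_to_fls (xsq * Kf) \<noteq> 0"
  unfolding H_eq using El_nz rX_nz by (simp add: fls_const_nonzero)

lemma opD_eq: "opD P \<kappa> F = 1 / fps_to_fls (xsq * Kf) * Vl F"
proof -
  define E where "E = fps_to_fls Ey"
  define x where "x = fls_const rX"
  define A where "A = fls_const (rcst aa)"
  define k2 where "k2 = fls_const (rcst (\<kappa>^2))"
  have E0: "E \<noteq> 0" using El_nz by (simp add: E_def)
  have x0: "x \<noteq> 0" by (simp add: x_def fls_const_nonzero rX_nz)
  have EE: "4 * fls_X + k2 * (fls_X - 1)^2 = E" by (simp add: E_def El_eq k2_def)
  have ia: "fls_const (rcst (\<i> * P)) = A" by (simp add: aa_def A_def)
  have "opD P \<kappa> F = A / (x^2 * fls_X) * fls_deriv F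
     - (x / 2 + (A / (x * fls_X^2)) * (1 + k2 * (fls_X^2 - 1) / (4 * E))) * xderiv F"
    unfolding opD_def ia x_def[symmetric] k2_def[symmetric] EE by simp
  also have "\<dots> = 1 / (x ^ 2 * 4 * E * fls_X ^ 2) * (4 * A * E * fls_X * fls_deriv F
     - x * (2 * E * x ^ 2 * fls_X ^ 2 + A * (4 * E + k2 * (fls_X ^ 2 - 1))) * xderiv F)"
    using E0 x0 by (simp add: field_simps power2_eq_square)
  also have "\<dots> = 1 / fps_to_fls (xsq * Kf) * Vl F"
    unfolding Vl_def c1_eq c2_eq H_eq E_def[symmetric] x_def[symmetric] A_def[symmetric] k2_def[symmetric]
    by simp
  finally show ?thesis .
qed


lemma rhs_eq:
  "- fls_const (rcst (p^2)) / (3 * fls_const rX ^ 4 * fls_X ^ 4 *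
      (1 + fls_const (rcst (\<kappa>^2)) * (fls_X - 1)^2 / (4 * fls_X)))
   = - fps_to_fls (xsq * cf (256 * p^2 / 3) * Ey^2 * fps_X^3) / fps_to_fls (xsq * Kf) ^ 3"
proof -
  define E where "E = fps_to_fls Ey"
  define x where "x = fls_const rX"
  define pp where "pp = fls_const (rcst (p^2))"
  define k2 where "k2 = fls_const (rcst (\<kappa>^2))"
  have E0: "E \<noteq> 0" using El_nz by (simp add: E_def)
  have x0: "x \<noteq> 0" by (simp add: x_def fls_const_nonzero rX_nz)
  have EE: "4 * fls_X + k2 * (fls_X - 1)^2 = E" by (simp add: E_def El_eq k2_def)
  have one: "1 + k2 * (fls_X - 1)^2 / (4 * fls_X) = E / (4 * fls_X)"
    using EE[symmetric] by (simp add: field_simps)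
  have c: "fls_const (rcst (256 * p^2 / 3)) = 256 * pp / 3"
    by (simp add: pp_def rcst_divide fls_const_divide_const[symmetric] kc_simps del: fls_const_mult_const)
  have F1: "fps_to_fls (xsq * cf (256 * p^2 / 3) * Ey^2 * fps_X^3) = x^2 * (256 * pp / 3) * E^2 * fls_X^3"
    by (simp add: fls_times_fps_to_fls fps_to_fls_power x_def E_def c)
  have F2: "fps_to_fls (xsq * Kf) = x^2 * 4 * E * fls_X^2" by (simp add: H_eq x_def E_def)
  show ?thesis
    unfolding pp_def[symmetric] k2_def[symmetric] x_def[symmetric] one F1 F2
    using E0 x0 by (simp add: field_simps eval_nat_numeral)
qed

theorem formal_sol_iff: "formal_sol P p \<kappa> S \<longleftrightarrow> Ecl2 S = 0"
proof -
  define Sf where "Sf = fps_to_fls S"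
  define H where "H = fps_to_fls (xsq * Kf)"
  have H0: "H \<noteq> 0" using H_nz by (simp add: H_def)
  define L where "L = Kf * S * Vf (Vf S) - S * Jf * Vf S - Kf * (Vf S)^2"
  define R where "R = xsq * cf (256 * p^2 / 3) * Ey^2 * fps_X^3"
  have D1: "opD P \<kappa> Sf = 1 / H * fps_to_fls (Vf S)"
    by (simp add: opD_eq Sf_def H_def Vl_fps)
  have Vh: "Vl (1 / H) = - fps_to_fls (xsq * Jf) / H^2"
    using Vl_inverse[OF H0] by (simp add: H_def Vl_fps Vf_xsqK)
  have D2: "opD P \<kappa> (opD P \<kappa> Sf) = 1 / H * (Vl (1 / H) * fps_to_fls (Vf S) + 1 / H * fps_to_fls (Vf (Vf S)))"
    unfolding opD_eq H_def[symmetric] Vl_mult by (simp only: Sf_def Vl_fps)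
  define VS where "VS = fps_to_fls (Vf S)"
  define VVS where "VVS = fps_to_fls (Vf (Vf S))"
  define JJ where "JJ = fps_to_fls (xsq * Jf)"
  have XL: "fps_to_fls (xsq * L) = H * Sf * VVS - Sf * JJ * VS - H * VS^2"
    by (simp add: L_def H_def Sf_def VS_def VVS_def JJ_def fls_times_fps_to_fls fps_to_fls_power algebra_simps)
  have LHS: "Sf * opD P \<kappa> (opD P \<kappa> Sf) - (opD P \<kappa> Sf)^2 = fps_to_fls (xsq * L) / H^3"
    unfolding D2
    unfolding D1 Vh XL VS_def[symmetric] VVS_def[symmetric] JJ_def[symmetric]
    using H0 by (simp add: field_simps power2_eq_square eval_nat_numeral)
  have RHS: "- fls_const (rcst (p^2)) / (3 * fls_const rX ^ 4 * fls_X ^ 4 *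
      (1 + fls_const (rcst (\<kappa>^2)) * (fls_X - 1)^2 / (4 * fls_X))) * (Sf^3 - 1)
      = - fps_to_fls (R * (S^3 - 1)) / H^3"
    unfolding rhs_eq by (simp add: R_def H_def Sf_def fls_times_fps_to_fls fps_to_fls_power)
  have "formal_sol P p \<kappa> S \<longleftrightarrow> fps_to_fls (xsq * L) / H^3 = - fps_to_fls (R * (S^3 - 1)) / H^3"
    unfolding formal_sol_def Let_def Sf_def[symmetric] LHS RHS[symmetric] by simp
  also have "\<dots> \<longleftrightarrow> fps_to_fls (xsq * L + R * (S^3 - 1)) = 0"
    using H0 by (simp add: field_simps eq_neg_iff_add_eq_0)
  also have "\<dots> \<longleftrightarrow> xsq * L + R * (S^3 - 1) = 0" by (simp only: fps_to_fls_eq_0_iff)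
  also have "xsq * L + R * (S^3 - 1) = xsq * Ecl2 S"
    by (simp add: L_def R_def Ecl2_def algebra_simps)
  also have "(xsq * Ecl2 S = 0) \<longleftrightarrow> Ecl2 S = 0"
    by (simp add: xsq_def rX_nz)
  finally show ?thesis .
qed

end

fun bl :: "(nat \<Rightarrow> (nat \<Rightarrow> 'a) \<Rightarrow> 'a) \<Rightarrow> nat \<Rightarrow> 'a list" where
  "bl F 0 = []"
| "bl F (Suc j) = bl F j @ [F j (\<lambda>i. bl F j ! i)]"

definition seqr :: "(nat \<Rightarrow> (nat \<Rightarrow> 'a) \<Rightarrow> 'a) \<Rightarrow> nat \<Rightarrow> 'a" where
  "seqr F j = bl F (Suc j) ! j"

lemma length_bl [simp]: "length (bl F j) = j" by (induction j) simp_all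

lemma bl_nth: "i < j \<Longrightarrow> bl F j ! i = seqr F i"
proof (induction j)
  case 0 thus ?case by simp
next
  case (Suc j)
  show ?case
  proof (cases "i < j")
    case True thus ?thesis using Suc by (simp add: nth_append)
  next
    case False
    hence "i = j" using Suc by simp
    thus ?thesis by (simp add: seqr_def)
  qed
qed

lemma seqr_eq:
  assumes "\<And>g h. (\<And>i. i < j \<Longrightarrow> g i = h i) \<Longrightarrow> F j g = F j h"
  shows "seqr F j = F j (seqr F)"
proof -
  have "seqr F j = F j (\<lambda>i. bl F j ! i)" by (simp add: seqr_def nth_append)
  also have "\<dots> = F j (seqr F)" by (rule assms) (simp add: bl_nth)
  finally show ?thesis .
qed

definition solP :: "nat \<Rightarrow> complex poly \<Rightarrow> complex poly" where
  "solP j g = Abs_poly (\<lambda>n. coeff g n / ((3 * of_nat n - 4 * of_nat j) * (3 * of_nat n - 4 * of_nat j + 2)))"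

lemma coeff_solP: "coeff (solP j g) n = coeff g n / ((3 * of_nat n - 4 * of_nat j) * (3 * of_nat n - 4 * of_nat j + 2))"
proof -
  have "coeff (solP j g) = (\<lambda>n. coeff g n / ((3 * of_nat n - 4 * of_nat j) * (3 * of_nat n - 4 * of_nat j + 2)))"
    unfolding solP_def by (rule coeff_Abs_poly[of "degree g"]) (simp add: coeff_eq_0)
  thus ?thesis by simp
qed

lemma factor_nz:
  assumes "3 * n + 4 \<le> 4 * j"
  shows "(3 * of_nat n - 4 * of_nat j) * (3 * of_nat n - 4 * of_nat j + 2) \<noteq> (0 :: complex)"
proof -
  have "(3 * of_nat n - 4 * of_nat j :: complex) = of_int (3 * int n - 4 * int j)" by simp
  moreover have "(3 * of_nat n - 4 * of_nat j + 2 :: complex) = of_int (3 * int n - 4 * int j + 2)" by simp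
  moreover have "3 * int n - 4 * int j \<noteq> 0" "3 * int n - 4 * int j + 2 \<noteq> 0" using assms by linarith+
  ultimately show ?thesis by (simp only: mult_eq_0_iff of_int_eq_0_iff) simp
qed

lemma EulP_solP:
  assumes "\<And>n. coeff g n \<noteq> 0 \<Longrightarrow> 3 * n + 4 \<le> 4 * j"
  shows "EulP j (solP j g) = g"
proof (rule poly_eqI)
  fix n
  show "coeff (EulP j (solP j g)) n = coeff g n"
  proof (cases "coeff g n = 0")
    case True thus ?thesis by (simp add: coeff_EulP coeff_solP)
  next
    case False
    with assms have "3 * n + 4 \<le> 4 * j" by blast
    from factor_nz[OF this] show ?thesis by (simp add: coeff_EulP coeff_solP)
  qed
qed

lemma EulR_add: "EulR m (r + s) = EulR m r + EulR m s"
  by (simp add: EulR_def algebra_simps)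

lemma xcoeff_to_fract [simp]: "xcoeff (to_fract a) n = coeff a n"
  by (simp add: xcoeff_def)

context prm begin

lemma Ecl2_nth2_cong: "X $ 0 = Y $ 0 \<Longrightarrow> Ecl2 X $ 2 = Ecl2 Y $ 2"
  unfolding Ecl2_nth2 using Vf_nth[OF ordge_0[of X]] Vf_nth[OF ordge_0[of Y]]
    Vf_nth[OF ordge_0[of "Vf X"]] Vf_nth[OF ordge_0[of "Vf Y"]] by simp

lemma trunc_cong: "(\<And>i. i < m \<Longrightarrow> X $ i = Y $ i) \<Longrightarrow> trunc m X = trunc m Y"
  by (rule fps_ext) simp

end

context prm begin

definition "Phi j f = Ecl2 (Abs_fps (\<lambda>i. if i < j then f i else 0)) $ (j + 2)"

lemma Phi_trunc: "Phi j (\<lambda>i. S $ i) = Ecl2 (trunc j S) $ (j + 2)"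
  by (simp add: Phi_def trunc_def)

lemma Phi_cong: "(\<And>i. i < j \<Longrightarrow> g i = h i) \<Longrightarrow> Phi j g = Phi j h"
  unfolding Phi_def by (rule arg_cong[of _ _ "\<lambda>X. Ecl2 X $ (j + 2)"]) (rule fps_ext, simp)

lemma sol_data:
  assumes E: "Ecl2 A = 0" and A0: "A $ 0 = rcst q" and q0: "q \<noteq> 0" and k: "k \<ge> 1"
  shows "\<exists>a \<phi>. A $ k = to_fract a \<and> okc 0 k a \<and> Phi k (\<lambda>i. A $ i) = to_fract \<phi>
     \<and> okc (-12) (k + 2) \<phi> \<and> to_fract \<phi> = - rcst (4 * q * aa^2 * \<kappa>^6) * to_fract (EulP k a)"
  using step[OF k A0 q0 PW_trunc_sol[OF E A0 q0]] E by (simp add: Phi_trunc)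

lemma existence:
  assumes E: "Ecl2 A = 0" and A0: "A $ 0 = rcst q" and q0: "q \<noteq> 0" and k: "k \<ge> 1"
      and km: "k mod 3 \<noteq> 1"
  shows "\<exists>B. Ecl2 B = 0 \<and> B $ 0 \<noteq> 0 \<and> (\<forall>j<k. B $ j = A $ j) \<and> xcoeff (B $ k) (2 * (Nk k + 1)) = c"
proof -
  define C where "C = 4 * q * aa^2 * \<kappa>^6"
  have C0: "C \<noteq> 0" using q0 aa_nz k0 by (simp add: C_def)
  obtain ak \<phi>k where ak: "A $ k = to_fract ak" "okc 0 k ak"
    using sol_data[OF E A0 q0 k] by blast
  define n0 where "n0 = 2 * (Nk k + 1)"
  have n0r: "3 * n0 = 4 * k \<or> 3 * n0 + 2 = 4 * k" using km k unfolding n0_def Nk_def by presburger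
  define \<delta> where "\<delta> = c - coeff ak n0"
  define F where "F = (\<lambda>j f. if j < k then A $ j else if j = k then A $ k + to_fract (monom \<delta> n0)
      else to_fract (solP j (smult (- 1 / C) (fst (quot_of_fract (Phi j f))))))"
  have Fc: "F j g = F j h" if "\<And>i. i < j \<Longrightarrow> g i = h i" for j g h
    unfolding F_def using Phi_cong[of j g h] that by simp
  define B where "B = Abs_fps (seqr F)"
  have Bj: "B $ j = F j (\<lambda>i. B $ i)" for j
    unfolding B_def fps_nth_Abs_fps by (rule seqr_eq[OF Fc])
  have Blow: "B $ j = A $ j" if "j < k" for j using Bj[of j] that by (simp add: F_def)
  have Bk: "B $ k = to_fract (ak + monom \<delta> n0)" using Bj[of k] ak by (simp add: F_def)
  have B0: "B $ 0 = rcst q" using Blow[of 0] k A0 by simp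
  have Bhigh: "B $ j = to_fract (solP j (smult (- 1 / C) (fst (quot_of_fract (Phi j (\<lambda>i. B $ i))))))"
    if "j > k" for j using Bj[of j] that by (simp add: F_def)
  have okn0: "okc 0 k (monom \<delta> n0)" using n0r unfolding okc_def n0_def by (auto simp: coeff_monom)
  have Bok: "j \<ge> 1 \<Longrightarrow> \<exists>b. B $ j = to_fract b \<and> okc 0 j b" for j
  proof (induction j rule: less_induct)
    case (less j)
    show ?case
    proof (cases "j < k")
      case True thus ?thesis using struct_sol[OF E A0 q0 less(2)] Blow by simp
    next
      case False
      show ?thesis
      proof (cases "j = k")
        case True thus ?thesis using Bk okc_add[OF ak(2) okn0] by blast
      next
        case False
        hence jk: "j > k" using \<open>\<not> j < k\<close> by simp
        have PWt: "PW 0 (trunc j B)" by (rule PW_trunc_of[OF B0]) (use less in auto)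
        obtain \<phi> where phi: "Ecl2 (trunc j B) $ (j + 2) = to_fract \<phi>" "okc (-12) (j + 2) \<phi>"
          using PW_Ecl2[OF PWt] unfolding PW_def by blast
        have "B $ j = to_fract (solP j (smult (- 1 / C) \<phi>))"
          using Bhigh[OF jk] phi(1) by (simp add: Phi_trunc)
        moreover have "okc 0 j (solP j (smult (- 1 / C) \<phi>))"
          using phi(2) unfolding okc_def by (auto simp: coeff_solP)
        ultimately show ?thesis by blast
      qed
    qed
  qed
  have PWB: "PW 0 (trunc m B)" for m by (rule PW_trunc_of[OF B0 Bok]) simp
  have EB: "Ecl2 B = 0"
  proof (rule fps_ext)
    fix n
    show "Ecl2 B $ n = 0 $ n"
    proof (cases "n < 2")
      case True thus ?thesis using Ecl2_ordge2[of B] by (simp add: ordge_def)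
    next
      case False
      then obtain m where nm: "n = m + 2" by (metis add.commute le_Suc_ex not_less)
      show ?thesis
      proof (cases "m = 0")
        case True
        have "Ecl2 B $ 2 = Ecl2 A $ 2" by (rule Ecl2_nth2_cong) (simp add: B0 A0)
        thus ?thesis using nm True E by (simp add: numeral_2_eq_2)
      next
        case False
        hence m1: "m \<ge> 1" by simp
        have linB: "Ecl2 B $ (m + 2) = Ecl2 (trunc m B) $ (m + 2) + rcst C * EulR m (B $ m)"
          using Ecl2_lin[OF m1 B0] by (simp add: C_def)
        have linA: "Ecl2 A $ (m + 2) = Ecl2 (trunc m A) $ (m + 2) + rcst C * EulR m (A $ m)"
          using Ecl2_lin[OF m1 A0] by (simp add: C_def)
        show ?thesis
        proof (cases "m \<le> k")
          case True
          have tr: "trunc m B = trunc m A" by (rule trunc_cong) (use True Blow in auto)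
          have "EulR m (B $ m) = EulR m (A $ m)"
          proof (cases "m = k")
            case True
            have "EulR k (to_fract (monom \<delta> n0)) = 0"
            proof -
              have "EulP k (monom \<delta> n0) = 0"
              proof (rule poly_eqI)
                fix i
                have "(3 * of_nat n0 - 4 * of_nat k) * (3 * of_nat n0 - 4 * of_nat k + 2) = (0 :: complex)"
                proof (cases "3 * n0 = 4 * k")
                  case True
                  hence "(of_nat (3 * n0) :: complex) = of_nat (4 * k)" by simp
                  thus ?thesis by simp
                next
                  case False
                  hence "3 * n0 + 2 = 4 * k" using n0r by simp
                  hence "(of_nat (3 * n0 + 2) :: complex) = of_nat (4 * k)" by simp
                  hence "3 * of_nat n0 - 4 * of_nat k + 2 = (0::complex)" by (simp add: algebra_simps)
                  thus ?thesis by simp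
                qed
                thus "coeff (EulP k (monom \<delta> n0)) i = coeff 0 i"
                  by (auto simp: coeff_EulP coeff_monom)
              qed
              thus ?thesis by (simp flip: to_fract_EulP)
            qed
            thus ?thesis using True Bk ak(1) by (simp add: EulR_add)
          qed (use True Blow in simp)
          thus ?thesis using nm linA linB tr E by simp
        next
          case False
          hence mk: "m > k" by simp
          obtain \<phi> where phi: "Ecl2 (trunc m B) $ (m + 2) = to_fract \<phi>" "okc (-12) (m + 2) \<phi>"
            using PW_Ecl2[OF PWB[of m]] unfolding PW_def by blast
          have g: "3 * i + 4 \<le> 4 * m" if "coeff (smult (- 1 / C) \<phi>) i \<noteq> 0" for i
            using that phi(2) by (auto simp: okc_def)
          have "B $ m = to_fract (solP m (smult (- 1 / C) \<phi>))"
            using Bhigh[OF mk] phi(1) by (simp add: Phi_trunc)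
          hence "EulR m (B $ m) = to_fract (EulP m (solP m (smult (- 1 / C) \<phi>)))"
            by (simp only: to_fract_EulP)
          hence "EulR m (B $ m) = to_fract (smult (- 1 / C) \<phi>)"
            using EulP_solP[of "smult (- 1 / C) \<phi>" m] g by metis
          hence "rcst C * EulR m (B $ m) = - to_fract \<phi>"
            using C0 by (simp add: to_fract_smult rcst_divide)
          thus ?thesis using nm linB phi(1) by simp
        qed
      qed
    qed
  qed
  have "xcoeff (B $ k) n0 = c"
    unfolding Bk xcoeff_to_fract by (simp add: \<delta>_def)
  hence "xcoeff (B $ k) (2 * (Nk k + 1)) = c" by (simp only: n0_def)
  moreover have "B $ 0 \<noteq> 0" using B0 q0 by simp
  ultimately show ?thesis using EB Blow by blast
qed

end

lemma thy_cf: "thy (cf c) = 0" by (rule fps_ext) simp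
lemma thx_cf: "thx (cf c) = 0" by (rule fps_ext) simp
lemma thy_zero: "thy 0 = 0" by (rule fps_ext) simp
lemma thx_zero: "thx 0 = 0" by (rule fps_ext) simp

context prm begin

lemma Vf_cf: "Vf (cf c) = 0" by (simp add: Vf_def thy_cf thx_cf)
lemma Vf_zero: "Vf 0 = 0" by (simp add: Vf_def thy_zero thx_zero)

lemma Ecl2_cf_nth3: "Ecl2 (cf q) $ 3 = rcst (256 * p^2 / 3) * rcst (\<kappa>^2) ^ 2 * (rcst q ^ 3 - 1)"
proof -
  have e: "Ecl2 (cf q) = (cf (256 * p^2 / 3) * Ey^2 * fps_X^3) * ((cf q)^3 - 1)"
    by (simp add: Ecl2_def Vf_cf Vf_zero)
  have a: "(cf (256 * p^2 / 3) * Ey^2 * fps_X^3) $ (0 + 3) = (cf (256 * p^2 / 3) * Ey^2) $ 0 * (fps_X^3) $ 3"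
    by (rule ordge_mult_nth[OF ordge_0 ordge_Xpow])
  have b: "((cf (256 * p^2 / 3) * Ey^2 * fps_X^3) * ((cf q)^3 - 1)) $ (3 + 0)
     = (cf (256 * p^2 / 3) * Ey^2 * fps_X^3) $ 3 * ((cf q)^3 - 1) $ 0"
    by (rule ordge_mult_nth[OF ordge_mult[OF ordge_0 ordge_Xpow[of 3], simplified] ordge_0])
  show ?thesis unfolding e using a b
    by (simp add: fps_power_zeroth cf_def del: rcst_power rcst_mult)
qed

definition "qq f = coeff (fst (quot_of_fract (f 0))) 0"
definition "RR k f = (if k = 0 then 0 else
   smult (- (P^(2*k) * \<kappa>^(2*k) * qq f^(2*k-1)) / (4 * qq f * aa^2 * \<kappa>^6)) (fst (quot_of_fract (Phi k f))))"

lemma RR_cong: "(\<forall>j<k. f j = g j) \<Longrightarrow> RR k f = RR k g"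
proof -
  assume H: "\<forall>j<k. f j = g j"
  show ?thesis
  proof (cases "k = 0")
    case False
    hence "f 0 = g 0" using H by simp
    moreover have "Phi k f = Phi k g" by (rule Phi_cong) (use H in simp)
    ultimately show ?thesis by (simp add: RR_def qq_def)
  qed (simp add: RR_def)
qed

lemma qq_sol: "A $ 0 = rcst q \<Longrightarrow> qq (\<lambda>j. A $ j) = q"
  by (simp add: qq_def rcst_def)

lemma evenE': "even (n::nat) \<Longrightarrow> \<exists>n'. n = 2 * n'" by (auto elim: evenE)

lemma clause2_sol:
  assumes E: "Ecl2 A = 0" and A0: "A $ 0 = rcst q" and q0: "q \<noteq> 0" and k: "k \<ge> 1"
  shows "\<exists>a. A $ k = to_fract a \<and> even_poly_le a (2 * (Nk k + 1)) \<and>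
            (k mod 3 = 1 \<longrightarrow> coeff a (2 * (Nk k + 1)) = 0) \<and>
            even_poly_le (RR k (\<lambda>j. A $ j)) (2 * Nk k) \<and>
            smult (P^(2*k) * \<kappa>^(2*k) * q^(2*k - 1)) (EulP k a) = RR k (\<lambda>j. A $ j)"
proof -
  obtain a \<phi> where d: "A $ k = to_fract a" "okc 0 k a" "Phi k (\<lambda>i. A $ i) = to_fract \<phi>"
     "okc (-12) (k + 2) \<phi>" "to_fract \<phi> = - rcst (4 * q * aa^2 * \<kappa>^6) * to_fract (EulP k a)"
    using sol_data[OF E A0 q0 k] by blast
  define C where "C = 4 * q * aa^2 * \<kappa>^6"
  have C0: "C \<noteq> 0" using q0 aa_nz k0 by (simp add: C_def)
  have t: "to_fract (- smult C (EulP k a)) = - rcst C * to_fract (EulP k a)"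
    by (simp only: to_fract_uminus to_fract_smult minus_mult_left)
  have phiE: "\<phi> = - smult C (EulP k a)"
    using d(5) unfolding C_def[symmetric] t[symmetric] by (simp only: to_fract_eq_iff)
  have RR: "RR k (\<lambda>j. A $ j) = smult (- (P^(2*k) * \<kappa>^(2*k) * q^(2*k-1)) / C) \<phi>"
    using k by (simp add: RR_def qq_sol[OF A0] d(3) C_def)
  have main: "smult (P^(2*k) * \<kappa>^(2*k) * q^(2*k - 1)) (EulP k a) = RR k (\<lambda>j. A $ j)"
    unfolding RR phiE using C0 by simp
  have ev1: "even_poly_le a (2 * (Nk k + 1))"
    unfolding even_poly_le_def
  proof
    show "degree a \<le> 2 * (Nk k + 1)"
    proof (rule degree_le, intro allI impI)
      fix i assume i: "2 * (Nk k + 1) < i"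
      show "coeff a i = 0"
      proof (rule ccontr)
        assume "coeff a i \<noteq> 0"
        hence "3 * int i - 4 * int k \<le> 0" using d(2) by (auto simp: okc_def)
        thus False using i unfolding Nk_def by presburger
      qed
    qed
    show "\<forall>j. odd j \<longrightarrow> coeff a j = 0" using d(2) by (auto simp: okc_def)
  qed
  have m3: "k mod 3 = 1 \<longrightarrow> coeff a (2 * (Nk k + 1)) = 0"
  proof
    assume km: "k mod 3 = 1"
    show "coeff a (2 * (Nk k + 1)) = 0"
    proof (rule ccontr)
      assume "coeff a (2 * (Nk k + 1)) \<noteq> 0"
      hence "3 * int (2 * (Nk k + 1)) - 4 * int k \<le> 0" using d(2) by (auto simp: okc_def)
      thus False using km unfolding Nk_def by presburger
    qed
  qed
  have ev2: "even_poly_le (RR k (\<lambda>j. A $ j)) (2 * Nk k)"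
    unfolding even_poly_le_def RR
  proof
    show "degree (smult (- (P^(2*k) * \<kappa>^(2*k) * q^(2*k-1)) / C) \<phi>) \<le> 2 * Nk k"
    proof (rule degree_le, intro allI impI)
      fix i assume i: "2 * Nk k < i"
      show "coeff (smult (- (P^(2*k) * \<kappa>^(2*k) * q^(2*k-1)) / C) \<phi>) i = 0"
      proof (rule ccontr)
        assume "coeff (smult (- (P^(2*k) * \<kappa>^(2*k) * q^(2*k-1)) / C) \<phi>) i \<noteq> 0"
        hence "coeff \<phi> i \<noteq> 0" by auto
        hence "even i" "3 * int i - 4 * int (k + 2) \<le> -12" using d(4) by (auto simp: okc_def)
        moreover obtain i' where "i = 2 * i'" using evenE'[OF \<open>even i\<close>] by blast
        ultimately show False using i k unfolding Nk_def by presburger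
      qed
    qed
    show "\<forall>j. odd j \<longrightarrow> coeff (smult (- (P^(2*k) * \<kappa>^(2*k) * q^(2*k-1)) / C) \<phi>) j = 0"
      using d(4) by (auto simp: okc_def)
  qed
  show ?thesis using d(1) ev1 m3 ev2 main by blast
qed

end

context prm begin

lemma trunc1: "A $ 0 = rcst q \<Longrightarrow> trunc 1 A = cf q"
  by (rule fps_ext) simp

lemma clause1_sol:
  assumes E: "Ecl2 A = 0" and A0: "A $ 0 = rcst q" and q0: "q \<noteq> 0"
  shows "A $ 1 = rcst (8 * p^2 * (q^3 - 1) / (3 * P^2 * \<kappa>^2 * q))"
proof -
  obtain a \<phi> where d: "A $ 1 = to_fract a" "okc 0 1 a" "Phi 1 (\<lambda>i. A $ i) = to_fract \<phi>"
     "okc (-12) (1 + 2) \<phi>" "to_fract \<phi> = - rcst (4 * q * aa^2 * \<kappa>^6) * to_fract (EulP 1 a)"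
    using sol_data[OF E A0 q0, of 1] by auto
  define a0 where "a0 = coeff a 0"
  have aa0: "a = [:a0:]"
  proof (rule poly_eqI)
    fix n show "coeff a n = coeff [:a0:] n"
    proof (cases n)
      case (Suc m)
      have "coeff a n = 0"
      proof (rule ccontr)
        assume "coeff a n \<noteq> 0"
        hence "even n" "3 * int n - 4 \<le> 0" using d(2) by (auto simp: okc_def)
        thus False using Suc by presburger
      qed
      thus ?thesis using Suc by simp
    qed (simp add: a0_def)
  qed
  have EP: "EulP 1 a = [:8 * a0:]"
    by (rule poly_eqI) (simp add: coeff_EulP aa0 coeff_pCons split: nat.splits)
  have t3: "(1::nat) + 2 = 3" by simp
  have "Phi 1 (\<lambda>i. A $ i) = Ecl2 (cf q) $ 3" using Phi_trunc[of 1 A] unfolding trunc1[OF A0] t3 .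
  hence "Phi 1 (\<lambda>i. A $ i) = rcst (256 * p^2 / 3) * rcst (\<kappa>^2) ^ 2 * (rcst q ^ 3 - 1)"
    using Ecl2_cf_nth3 by simp
  hence "rcst (256 * p^2 / 3) * rcst (\<kappa>^2) ^ 2 * (rcst q ^ 3 - 1) = - rcst (4 * q * aa^2 * \<kappa>^6) * rcst (8 * a0)"
    using d(3) d(5) EP by (simp add: rcst_def del: rcst_mult rcst_power)
  hence "rcst (256 * p^2 / 3 * (\<kappa>^2) ^ 2 * (q ^ 3 - 1)) = rcst (- (4 * q * aa^2 * \<kappa>^6) * (8 * a0))"
    by (simp only: rcst_mult rcst_power rcst_diff rcst_1 rcst_uminus mult_minus_left)
  hence eq: "256 * p^2 / 3 * (\<kappa>^2) ^ 2 * (q ^ 3 - 1) = - (4 * q * aa^2 * \<kappa>^6) * (8 * a0)"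
    by (simp only: rcst_eq_iff)
  have aa2: "aa ^ 2 = - (P ^ 2)" by (simp add: aa_def power_mult_distrib)
  have nz: "32 * q * aa ^ 2 * \<kappa> ^ 6 \<noteq> 0" using q0 k0 aa_nz by simp
  have a0e: "a0 = - (256 * p^2 / 3 * (\<kappa>^2) ^ 2 * (q ^ 3 - 1)) / (32 * q * aa ^ 2 * \<kappa> ^ 6)"
    using eq nz by (simp add: field_simps)
  have "a0 = 8 * p^2 * (q^3 - 1) / (3 * P^2 * \<kappa>^2 * q)"
    unfolding a0e aa2 using q0 k0 P0 by (simp add: field_simps eval_nat_numeral)
  thus ?thesis using d(1) aa0 by (simp add: rcst_def)
qed

lemma clause3_sol:
  assumes EA: "Ecl2 A = 0" and A0: "A $ 0 = rcst q" and q0: "q \<noteq> 0"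
      and EB: "Ecl2 B = 0" and k: "k \<ge> 1" and agree: "\<forall>j<k. A $ j = B $ j"
      and m: "m \<le> Nk k"
  shows "xcoeff (A $ k) (2 * m) = xcoeff (B $ k) (2 * m)"
proof -
  have B0: "B $ 0 = rcst q" using agree k A0 by auto
  obtain a \<phi> where da: "A $ k = to_fract a" "Phi k (\<lambda>i. A $ i) = to_fract \<phi>"
     "to_fract \<phi> = - rcst (4 * q * aa^2 * \<kappa>^6) * to_fract (EulP k a)"
    using sol_data[OF EA A0 q0 k] by blast
  obtain b \<psi> where db: "B $ k = to_fract b" "Phi k (\<lambda>i. B $ i) = to_fract \<psi>"
     "to_fract \<psi> = - rcst (4 * q * aa^2 * \<kappa>^6) * to_fract (EulP k b)"
    using sol_data[OF EB B0 q0 k] by blast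
  have "Phi k (\<lambda>i. A $ i) = Phi k (\<lambda>i. B $ i)" by (rule Phi_cong) (use agree in simp)
  hence "rcst (4 * q * aa^2 * \<kappa>^6) * to_fract (EulP k a) = rcst (4 * q * aa^2 * \<kappa>^6) * to_fract (EulP k b)"
    using da db by simp
  hence "EulP k a = EulP k b" using q0 aa_nz k0 by (simp del: rcst_mult rcst_power)
  hence "coeff (EulP k a) (2 * m) = coeff (EulP k b) (2 * m)" by simp
  moreover have "3 * (2 * m) + 4 \<le> 4 * k" using m k unfolding Nk_def by presburger
  note fz = factor_nz[OF this]
  ultimately have "coeff a (2 * m) = coeff b (2 * m)"
    unfolding coeff_EulP using fz by simp
  thus ?thesis using da(1) db(1) by simp
qed

end

theorem main_result:
  fixes P p \<kappa> :: complex
  assumes "P \<noteq> 0" and "p \<noteq> 0" and "\<kappa> \<noteq> 0"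
  shows
  "(\<forall>A. formal_sol P p \<kappa> A \<and> fps_nth A 0 \<noteq> 0 \<longrightarrow>
      (\<exists>q. q \<noteq> 0 \<and> fps_nth A 0 = rcst q \<and>
           fps_nth A 1 = rcst (8 * p^2 * (q^3 - 1) / (3 * P^2 * \<kappa>^2 * q)))) \<and>
   (\<exists>Rf :: nat \<Rightarrow> (nat \<Rightarrow> ratfun) \<Rightarrow> complex poly.
      (\<forall>k f g. (\<forall>j<k. f j = g j) \<longrightarrow> Rf k f = Rf k g) \<and>
      (\<forall>A k. formal_sol P p \<kappa> A \<and> fps_nth A 0 \<noteq> 0 \<and> k \<ge> 1 \<longrightarrow>
         (\<exists>a q. fps_nth A 0 = rcst q \<and> fps_nth A k = to_fract a \<and>
            even_poly_le a (2 * (Nk k + 1)) \<and>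
            (k mod 3 = 1 \<longrightarrow> coeff a (2 * (Nk k + 1)) = 0) \<and>
            even_poly_le (Rf k (\<lambda>j. fps_nth A j)) (2 * Nk k) \<and>
            smult (P^(2*k) * \<kappa>^(2*k) * q^(2*k - 1))
              (smult 9 ([:0, 0, 1:] * pderiv (pderiv a))
               - smult (3 * (8 * of_nat k - 5)) ([:0, 1:] * pderiv a)
               + smult (8 * of_nat k * (2 * of_nat k - 1)) a)
            = Rf k (\<lambda>j. fps_nth A j)))) \<and>
   (\<forall>A B k. formal_sol P p \<kappa> A \<and> fps_nth A 0 \<noteq> 0 \<and> formal_sol P p \<kappa> B \<and> fps_nth B 0 \<noteq> 0 \<and>
      k \<ge> 1 \<and> (\<forall>j<k. fps_nth A j = fps_nth B j) \<longrightarrow>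
      (\<forall>m \<le> Nk k. xcoeff (fps_nth A k) (2 * m) = xcoeff (fps_nth B k) (2 * m))) \<and>
   (\<forall>A k c. formal_sol P p \<kappa> A \<and> fps_nth A 0 \<noteq> 0 \<and> k \<ge> 1 \<and> k mod 3 \<noteq> 1 \<longrightarrow>
      (\<exists>B. formal_sol P p \<kappa> B \<and> fps_nth B 0 \<noteq> 0 \<and> (\<forall>j<k. fps_nth B j = fps_nth A j) \<and>
           xcoeff (fps_nth B k) (2 * (Nk k + 1)) = c))"
proof -
  interpret prm P p \<kappa> using assms by unfold_locales
  have q: "\<exists>q. q \<noteq> 0 \<and> A $ 0 = rcst q" if "formal_sol P p \<kappa> A" "A $ 0 \<noteq> 0" for A
    using A0_const[of A] that by (simp add: formal_sol_iff)
  have c1: "\<forall>A. formal_sol P p \<kappa> A \<and> fps_nth A 0 \<noteq> 0 \<longrightarrow>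
      (\<exists>q. q \<noteq> 0 \<and> fps_nth A 0 = rcst q \<and>
           fps_nth A 1 = rcst (8 * p^2 * (q^3 - 1) / (3 * P^2 * \<kappa>^2 * q)))"
  proof (intro allI impI)
    fix A assume H: "formal_sol P p \<kappa> A \<and> fps_nth A 0 \<noteq> 0"
    then obtain q where "q \<noteq> 0" "A $ 0 = rcst q" using q by blast
    thus "\<exists>q. q \<noteq> 0 \<and> fps_nth A 0 = rcst q \<and>
           fps_nth A 1 = rcst (8 * p^2 * (q^3 - 1) / (3 * P^2 * \<kappa>^2 * q))"
      using clause1_sol[of A q] H by (auto simp: formal_sol_iff)
  qed
  have c2: "\<exists>Rf :: nat \<Rightarrow> (nat \<Rightarrow> ratfun) \<Rightarrow> complex poly.
      (\<forall>k f g. (\<forall>j<k. f j = g j) \<longrightarrow> Rf k f = Rf k g) \<and>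
      (\<forall>A k. formal_sol P p \<kappa> A \<and> fps_nth A 0 \<noteq> 0 \<and> k \<ge> 1 \<longrightarrow>
         (\<exists>a q. fps_nth A 0 = rcst q \<and> fps_nth A k = to_fract a \<and>
            even_poly_le a (2 * (Nk k + 1)) \<and>
            (k mod 3 = 1 \<longrightarrow> coeff a (2 * (Nk k + 1)) = 0) \<and>
            even_poly_le (Rf k (\<lambda>j. fps_nth A j)) (2 * Nk k) \<and>
            smult (P^(2*k) * \<kappa>^(2*k) * q^(2*k - 1))
              (smult 9 ([:0, 0, 1:] * pderiv (pderiv a))
               - smult (3 * (8 * of_nat k - 5)) ([:0, 1:] * pderiv a)
               + smult (8 * of_nat k * (2 * of_nat k - 1)) a)
            = Rf k (\<lambda>j. fps_nth A j)))"
  proof (intro exI[of _ RR] conjI allI impI)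
    fix k :: nat and f g :: "nat \<Rightarrow> ratfun"
    assume "\<forall>j<k. f j = g j" thus "RR k f = RR k g" by (rule RR_cong)
  next
    fix A :: "ratfun fps" and k :: nat assume H: "formal_sol P p \<kappa> A \<and> fps_nth A 0 \<noteq> 0 \<and> k \<ge> 1"
    then obtain q where q: "q \<noteq> 0" "A $ 0 = rcst q" using q by blast
    from clause2_sol[OF _ q(2) q(1), of k] H show "\<exists>a q. fps_nth A 0 = rcst q \<and> fps_nth A k = to_fract a \<and>
            even_poly_le a (2 * (Nk k + 1)) \<and>
            (k mod 3 = 1 \<longrightarrow> coeff a (2 * (Nk k + 1)) = 0) \<and>
            even_poly_le (RR k (\<lambda>j. fps_nth A j)) (2 * Nk k) \<and>
            smult (P^(2*k) * \<kappa>^(2*k) * q^(2*k - 1))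
              (smult 9 ([:0, 0, 1:] * pderiv (pderiv a))
               - smult (3 * (8 * of_nat k - 5)) ([:0, 1:] * pderiv a)
               + smult (8 * of_nat k * (2 * of_nat k - 1)) a)
            = RR k (\<lambda>j. fps_nth A j)"
      unfolding EulP_def formal_sol_iff using q(2) by blast
  qed
  have c3: "\<forall>A B k. formal_sol P p \<kappa> A \<and> fps_nth A 0 \<noteq> 0 \<and> formal_sol P p \<kappa> B \<and> fps_nth B 0 \<noteq> 0 \<and>
      k \<ge> 1 \<and> (\<forall>j<k. fps_nth A j = fps_nth B j) \<longrightarrow>
      (\<forall>m \<le> Nk k. xcoeff (fps_nth A k) (2 * m) = xcoeff (fps_nth B k) (2 * m))"
  proof (intro allI impI)
    fix A B :: "ratfun fps" and k m :: nat assume H: "formal_sol P p \<kappa> A \<and> fps_nth A 0 \<noteq> 0 \<and> formal_sol P p \<kappa> B \<and> fps_nth B 0 \<noteq> 0 \<and>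
      k \<ge> 1 \<and> (\<forall>j<k. fps_nth A j = fps_nth B j)" and m: "m \<le> Nk k"
    then obtain q where q: "q \<noteq> 0" "A $ 0 = rcst q" using q by blast
    show "xcoeff (fps_nth A k) (2 * m) = xcoeff (fps_nth B k) (2 * m)"
      using clause3_sol[OF _ q(2) q(1) _ _ _ m] H by (simp add: formal_sol_iff)
  qed
  have c4: "\<forall>A k c. formal_sol P p \<kappa> A \<and> fps_nth A 0 \<noteq> 0 \<and> k \<ge> 1 \<and> k mod 3 \<noteq> 1 \<longrightarrow>
      (\<exists>B. formal_sol P p \<kappa> B \<and> fps_nth B 0 \<noteq> 0 \<and> (\<forall>j<k. fps_nth B j = fps_nth A j) \<and>
           xcoeff (fps_nth B k) (2 * (Nk k + 1)) = c)"
  proof (intro allI impI)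
    fix A :: "ratfun fps" and k :: nat and c :: complex assume H: "formal_sol P p \<kappa> A \<and> fps_nth A 0 \<noteq> 0 \<and> k \<ge> 1 \<and> k mod 3 \<noteq> 1"
    then obtain q where q: "q \<noteq> 0" "A $ 0 = rcst q" using q by blast
    show "\<exists>B. formal_sol P p \<kappa> B \<and> fps_nth B 0 \<noteq> 0 \<and> (\<forall>j<k. fps_nth B j = fps_nth A j) \<and>
           xcoeff (fps_nth B k) (2 * (Nk k + 1)) = c"
      using existence[OF _ q(2) q(1), of k c] H by (simp add: formal_sol_iff)
  qed
  show ?thesis using c1 c2 c3 c4 by blast
qed

theorem mainTheorem11:
  fixes P p \<kappa> :: complex
  assumes "P \<noteq> 0" and "p \<noteq> 0" and "\<kappa> \<noteq> 0"
  shows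
  "(\<forall>A. formal_sol P p \<kappa> A \<and> fps_nth A 0 \<noteq> 0 \<longrightarrow>
      (\<exists>q. q \<noteq> 0 \<and> fps_nth A 0 = rcst q \<and>
           fps_nth A 1 = rcst (8 * p^2 * (q^3 - 1) / (3 * P^2 * \<kappa>^2 * q)))) \<and>
   (\<exists>Rf :: nat \<Rightarrow> (nat \<Rightarrow> ratfun) \<Rightarrow> complex poly.
      (\<forall>k f g. (\<forall>j<k. f j = g j) \<longrightarrow> Rf k f = Rf k g) \<and>
      (\<forall>A k. formal_sol P p \<kappa> A \<and> fps_nth A 0 \<noteq> 0 \<and> k \<ge> 1 \<longrightarrow>
         (\<exists>a q. fps_nth A 0 = rcst q \<and> fps_nth A k = to_fract a \<and>
            even_poly_le a (2 * (Nk k + 1)) \<and>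
            (k mod 3 = 1 \<longrightarrow> coeff a (2 * (Nk k + 1)) = 0) \<and>
            even_poly_le (Rf k (\<lambda>j. fps_nth A j)) (2 * Nk k) \<and>
            smult (P^(2*k) * \<kappa>^(2*k) * q^(2*k - 1))
              (smult 9 ([:0, 0, 1:] * pderiv (pderiv a))
               - smult (3 * (8 * of_nat k - 5)) ([:0, 1:] * pderiv a)
               + smult (8 * of_nat k * (2 * of_nat k - 1)) a)
            = Rf k (\<lambda>j. fps_nth A j)))) \<and>
   (\<forall>A B k. formal_sol P p \<kappa> A \<and> fps_nth A 0 \<noteq> 0 \<and> formal_sol P p \<kappa> B \<and> fps_nth B 0 \<noteq> 0 \<and>
      k \<ge> 1 \<and> (\<forall>j<k. fps_nth A j = fps_nth B j) \<longrightarrow>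
      (\<forall>m \<le> Nk k. xcoeff (fps_nth A k) (2 * m) = xcoeff (fps_nth B k) (2 * m))) \<and>
   (\<forall>A k c. formal_sol P p \<kappa> A \<and> fps_nth A 0 \<noteq> 0 \<and> k \<ge> 1 \<and> k mod 3 \<noteq> 1 \<longrightarrow>
      (\<exists>B. formal_sol P p \<kappa> B \<and> fps_nth B 0 \<noteq> 0 \<and> (\<forall>j<k. fps_nth B j = fps_nth A j) \<and>
           xcoeff (fps_nth B k) (2 * (Nk k + 1)) = c))"
  using assms by (rule main_result)

end
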